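(* Let $\mathbb{P}=\mathcal{P}\cup\{\infty\}$ and $\mathcal{U}=\prod_{p\in\mathcal{P}}\mathbb{Z}_p^*\times\mathbb{R}^*_+$. Define $\chi:\mathcal{A}\to2^{\mathbb{P}}\sqcup\mathcal{U}$ by $\chi(a)=a\operatorname{sign}(a_\infty)\prod_{p\in\mathcal{P}}p^{-v_p(a)}\in\mathcal{U}$ if $a$ is invertible, and $\chi(a)=\{p\in\mathbb{P}: a_p=0\}\in2^{\mathbb{P}}$ if $a$ is not invertible. Then $\chi$ is surjective, and for all $a,b\in\mathcal{A}$ we have $\chi(a)=\chi(b)$ if and only if $\overline{\mathbb{Q}^*a}=\overline{\mathbb{Q}^*b}$. Consequently $\chi$ factors through the quasi-orbit map and induces a bijection of $2^{\mathbb{P}}\sqcup\mathcal{U}$ onto the quasi-orbit space $\mathcal{Q}(\mathcal{A}/\mathbb{Q}^* )$.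
   Context: $\mathcal{P}$ is the set of primes. $\mathcal{A}=\mathcal{A}_f\times\mathbb{R}$ is the ring of adeles ($\mathcal{A}_f$ the restricted product of the $\mathbb{Q}_p$ relative to the $\mathbb{Z}_p$), with product topology, componentwise operations, and $\mathbb{Q}^*$ acting by multiplication through the diagonal embedding. Write $a=((a_p)_{p\in\mathcal{P}},a_\infty)$; $a$ is invertible iff all $a_p\ne0$, $a_\infty\ne0$ and $a_p\in\mathbb{Z}_p^*$ for almost all $p$. $v_p$ is the $p$-adic valuation, $v_p(a):=v_p(a_p)$ (so for invertible $a$, $\prod_p p^{-v_p(a)}$ is a finite product and a rational number). The quasi-orbit space $\mathcal{Q}(\mathcal{A}/\mathbb{Q}^* )$ is the quotient of $\mathcal{A}$ by $a\sim b\iff\overline{\mathbb{Q}^*a}=\overline{\mathbb{Q}^*b}$. *)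

theory Defs
  imports "HOL-Analysis.Analysis" "HOL-Computational_Algebra.Primes"
begin

definition rat_pval :: "nat \<Rightarrow> rat \<Rightarrow> int" where
  "rat_pval p q = (if q = 0 then 0 else
     int (multiplicity (int p) (fst (quotient_of q))) -
     int (multiplicity (int p) (snd (quotient_of q))))"

definition rat_pabs :: "nat \<Rightarrow> rat \<Rightarrow> real" where
  "rat_pabs p q = (if q = 0 then 0 else real p powi (- rat_pval p q))"

definition padic_cauchy :: "nat \<Rightarrow> (nat \<Rightarrow> rat) \<Rightarrow> bool" where
  "padic_cauchy p s \<longleftrightarrow>
     (\<forall>e>0. \<exists>N. \<forall>m\<ge>N. \<forall>n\<ge>N. rat_pabs p (s m - s n) < e)"

definition padic_equiv :: "nat \<Rightarrow> (nat \<Rightarrow> rat) \<Rightarrow> (nat \<Rightarrow> rat) \<Rightarrow> bool" where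
  "padic_equiv p s t \<longleftrightarrow> (\<lambda>n. rat_pabs p (s n - t n)) \<longlonglongrightarrow> 0"

type_synonym padic = "(nat \<Rightarrow> rat) set"

definition padic_class :: "nat \<Rightarrow> (nat \<Rightarrow> rat) \<Rightarrow> padic" where
  "padic_class p s = {t. padic_cauchy p t \<and> padic_equiv p s t}"

definition Qp :: "nat \<Rightarrow> padic set" where
  "Qp p = {padic_class p s | s. padic_cauchy p s}"

definition padic_zero :: "nat \<Rightarrow> padic" where
  "padic_zero p = padic_class p (\<lambda>n. 0)"

definition padic_smult :: "nat \<Rightarrow> rat \<Rightarrow> padic \<Rightarrow> padic" where
  "padic_smult p q x = {t. padic_cauchy p t \<and> (\<exists>s\<in>x. padic_equiv p (\<lambda>n. q * s n) t)}"

definition padic_abs :: "nat \<Rightarrow> padic \<Rightarrow> real" where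
  "padic_abs p x = lim (\<lambda>n. rat_pabs p ((SOME s. s \<in> x) n))"

definition padic_dist :: "nat \<Rightarrow> padic \<Rightarrow> padic \<Rightarrow> real" where
  "padic_dist p x y =
     lim (\<lambda>n. rat_pabs p ((SOME s. s \<in> x) n - (SOME t. t \<in> y) n))"

definition padic_val :: "nat \<Rightarrow> padic \<Rightarrow> int" where
  "padic_val p x = (THE k. padic_abs p x = real p powi (- k))"

definition Zp :: "nat \<Rightarrow> padic set" where
  "Zp p = {x \<in> Qp p. padic_abs p x \<le> 1}"

definition Zp_units :: "nat \<Rightarrow> padic set" where
  "Zp_units p = {x \<in> Qp p. padic_abs p x = 1}"

definition padic_topology :: "nat \<Rightarrow> padic topology" where
  "padic_topology p = topology_generated_by
     {{y \<in> Qp p. padic_dist p x y < r} | x r. x \<in> Qp p \<and> r > 0}"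

text \<open>An adele is a pair (finite part, real part); the finite part is indexed by
  natural numbers, the component at a prime p lying in Q_p; at non-primes
  the (irrelevant) component is fixed to be the empty set.\<close>
type_synonym adele = "(nat \<Rightarrow> padic) \<times> real"

definition adeles :: "adele set" where
  "adeles = {a. (\<forall>p. prime p \<longrightarrow> fst a p \<in> Qp p) \<and> (\<forall>p. \<not> prime p \<longrightarrow> fst a p = {}) \<and>
                finite {p. prime p \<and> fst a p \<notin> Zp p}}"

text \<open>Subbasis (in fact a basis) of the topology of A = A_f x R, A_f carrying the
  restricted product topology.\<close>
definition adele_basis :: "adele set set" where
  "adele_basis = {{a \<in> adeles. (\<forall>p. prime p \<longrightarrow> fst a p \<in> U p) \<and> snd a \<in> V} | U V.
      (\<forall>p. prime p \<longrightarrow> openin (padic_topology p) (U p)) \<and>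
      finite {p. prime p \<and> U p \<noteq> Zp p} \<and> open V}"

definition adele_topology :: "adele topology" where
  "adele_topology = topology_generated_by adele_basis"

definition rat_act :: "rat \<Rightarrow> adele \<Rightarrow> adele" where
  "rat_act q a = ((\<lambda>p. if prime p then padic_smult p q (fst a p) else {}), of_rat q * snd a)"

definition orbit :: "adele \<Rightarrow> adele set" where
  "orbit a = {rat_act q a | q. q \<noteq> 0}"

definition adele_invertible :: "adele \<Rightarrow> bool" where
  "adele_invertible a \<longleftrightarrow> (\<forall>p. prime p \<longrightarrow> fst a p \<noteq> padic_zero p) \<and> snd a \<noteq> 0 \<and>
     finite {p. prime p \<and> fst a p \<notin> Zp_units p}"

definition adele_val :: "nat \<Rightarrow> adele \<Rightarrow> int" where
  "adele_val p a = padic_val p (fst a p)"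

text \<open>P-bar = primes together with infinity; infinity is represented by None.\<close>
definition Pbar :: "nat option set" where
  "Pbar = {None} \<union> Some ` {p. prime p}"

definition units_U :: "adele set" where
  "units_U = {a \<in> adeles. (\<forall>p. prime p \<longrightarrow> fst a p \<in> Zp_units p) \<and> snd a > 0}"

definition chi_codomain :: "(nat option set + adele) set" where
  "chi_codomain = Inl ` Pow Pbar \<union> Inr ` units_U"

definition chi :: "adele \<Rightarrow> nat option set + adele" where
  "chi a = (if adele_invertible a then
      Inr (rat_act ((if snd a > 0 then 1 else -1) *
             (\<Prod>p\<in>{p. prime p \<and> adele_val p a \<noteq> 0}. (of_nat p :: rat) powi (- adele_val p a))) a)
    else Inl ({Some p | p. prime p \<and> fst a p = padic_zero p} \<union> (if snd a = 0 then {None} else {})))"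

definition quasi_orbit_rel :: "(adele \<times> adele) set" where
  "quasi_orbit_rel = {(a, b). a \<in> adeles \<and> b \<in> adeles \<and>
     adele_topology closure_of orbit a = adele_topology closure_of orbit b}"

end

theory Submission
  imports Defs
begin

lemma primeI_int: "prime (p::nat) \<Longrightarrow> prime (int p)" by simp

lemma pval_frac:
  assumes p: "prime (p::nat)" and a: "a \<noteq> 0" and b: "b \<noteq> 0"
  shows "rat_pval p (of_int a / of_int b) =
         int (multiplicity (int p) a) - int (multiplicity (int p) b)"
proof -
  define q where "q = (of_int a / of_int b :: rat)"
  have q0: "q \<noteq> 0" using a b by (simp add: q_def)
  obtain n d where nd: "quotient_of q = (n, d)" by (cases "quotient_of q") auto
  have d: "d > 0" using quotient_of_denom_pos[OF nd] .
  have qnd: "q = of_int n / of_int d" using quotient_of_div[OF nd] .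
  have n: "n \<noteq> 0" using q0 qnd by auto
  have "of_int a / of_int b = (of_int n / of_int d :: rat)" using qnd q_def by simp
  hence "of_int (a * d) = (of_int (n * b) :: rat)" using b d
    by (simp add: field_simps)
  hence eq: "a * d = n * b" by (simp only: of_int_eq_iff)
  have pe: "prime_elem (int p)" using p by simp
  have "multiplicity (int p) (a*d) = multiplicity (int p) (n*b)" using eq by simp
  hence "multiplicity (int p) a + multiplicity (int p) d = multiplicity (int p) n + multiplicity (int p) b"
    using prime_elem_multiplicity_mult_distrib[OF pe] a b n d by simp
  thus ?thesis using q0 nd by (simp add: rat_pval_def q_def[symmetric])
qed

lemma rat_as_frac: obtains a b where "a \<noteq> 0 \<or> (x::rat) = 0" "b > 0" "x = of_int a / of_int b"
proof -
  obtain n d where nd: "quotient_of x = (n, d)" by (cases "quotient_of x") auto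
  show ?thesis using that[of n d] quotient_of_denom_pos[OF nd] quotient_of_div[OF nd] by auto
qed

lemma pval_mult:
  assumes p: "prime (p::nat)" and x: "x \<noteq> 0" and y: "y \<noteq> 0"
  shows "rat_pval p (x * y) = rat_pval p x + rat_pval p y"
proof -
  obtain a b where ab: "a \<noteq> 0" "b > 0" "x = of_int a / of_int b" using rat_as_frac[of x] x by metis
  obtain c d where cd: "c \<noteq> 0" "d > 0" "y = of_int c / of_int d" using rat_as_frac[of y] y by metis
  have e: "x * y = of_int (a*c) / of_int (b*d)" using ab cd by simp
  have pe: "prime_elem (int p)" using p by simp
  have "rat_pval p (x * y) = int (multiplicity (int p) (a*c)) - int (multiplicity (int p) (b*d))"
    unfolding e by (rule pval_frac[OF p]) (use ab cd in auto)
  thus ?thesis using ab cd pval_frac[OF p] prime_elem_multiplicity_mult_distrib[OF pe]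
    by simp
qed

lemma pval_add:
  assumes p: "prime (p::nat)" and x: "x \<noteq> 0" and y: "y \<noteq> 0" and xy: "x + y \<noteq> 0"
  shows "rat_pval p (x + y) \<ge> min (rat_pval p x) (rat_pval p y)"
proof -
  obtain a b where ab: "a \<noteq> 0" "b > 0" "x = of_int a / of_int b" using rat_as_frac[of x] x by metis
  obtain c d where cd: "c \<noteq> 0" "d > 0" "y = of_int c / of_int d" using rat_as_frac[of y] y by metis
  have x': "x = of_int (a*d) / of_int (b*d)" using ab cd by simp
  have y': "y = of_int (c*b) / of_int (b*d)" using ab cd by simp
  have s: "x + y = of_int (a*d + c*b) / of_int (b*d)" using x' y' by (simp add: add_divide_distrib)
  have s0: "a*d + c*b \<noteq> 0" using xy s by (metis div_0 of_int_0)
  define m where "m = min (multiplicity (int p) (a*d)) (multiplicity (int p) (c*b))"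
  have "int p ^ m dvd a*d" unfolding m_def by (intro multiplicity_dvd') simp
  moreover have "int p ^ m dvd c*b" unfolding m_def by (intro multiplicity_dvd') simp
  ultimately have "int p ^ m dvd a*d + c*b" by simp
  hence "multiplicity (int p) (a*d + c*b) \<ge> m"
    using s0 p by (intro multiplicity_geI) (auto simp: prime_int_iff)
  moreover have "rat_pval p (x + y) = int (multiplicity (int p) (a*d + c*b)) - int (multiplicity (int p) (b*d))"
    unfolding s by (rule pval_frac[OF p]) (use ab cd s0 in auto)
  moreover have "rat_pval p x = int (multiplicity (int p) (a*d)) - int (multiplicity (int p) (b*d))"
    unfolding x' by (rule pval_frac[OF p]) (use ab cd in auto)
  moreover have "rat_pval p y = int (multiplicity (int p) (c*b)) - int (multiplicity (int p) (b*d))"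
    unfolding y' by (rule pval_frac[OF p]) (use ab cd in auto)
  ultimately show ?thesis unfolding m_def by (auto simp: min_def)
qed

lemma pabs_nonneg: "rat_pabs p x \<ge> 0"
  by (simp add: rat_pabs_def)

lemma pabs_zero[simp]: "rat_pabs p 0 = 0" by (simp add: rat_pabs_def)

lemma pabs_pos: "prime p \<Longrightarrow> x \<noteq> 0 \<Longrightarrow> rat_pabs p x > 0"
  by (simp add: rat_pabs_def prime_gt_0_nat)

lemma pabs_eq0_iff: "prime p \<Longrightarrow> rat_pabs p x = 0 \<longleftrightarrow> x = 0"
  by (metis pabs_pos less_irrefl pabs_zero)

lemma pabs_mult: assumes p: "prime p" shows "rat_pabs p (x * y) = rat_pabs p x * rat_pabs p y"
proof (cases "x = 0 \<or> y = 0")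
  case False
  have "real p \<noteq> 0" using p prime_gt_0_nat by simp
  hence "real p powi (- rat_pval p x + - rat_pval p y) = real p powi (- rat_pval p x) * real p powi (- rat_pval p y)"
    by (rule power_int_add[OF disjI1])
  thus ?thesis using False p by (simp add: rat_pabs_def pval_mult)
qed (auto simp: rat_pabs_def)

lemma pval_minus: "prime p \<Longrightarrow> x \<noteq> 0 \<Longrightarrow> rat_pval p (- x) = rat_pval p x"
proof -
  assume p: "prime p" and x: "x \<noteq> 0"
  have m1: "rat_pval p (-1) = 0"
    using pval_frac[OF p, of "-1" 1] by (simp add: multiplicity_unit_right)
  have "rat_pval p (-1 * x) = rat_pval p (-1) + rat_pval p x" using pval_mult[OF p, of "-1" x] x by simp
  thus ?thesis using m1 by simp
qed

lemma pabs_minus: "prime p \<Longrightarrow> rat_pabs p (- x) = rat_pabs p x"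
  by (cases "x = 0") (auto simp: rat_pabs_def pval_minus)

lemma pabs_ultra: assumes p: "prime p"
  shows "rat_pabs p (x + y) \<le> max (rat_pabs p x) (rat_pabs p y)"
proof (cases "x = 0 \<or> y = 0 \<or> x + y = 0")
  case True thus ?thesis using pabs_nonneg[of p] by (auto simp: max_def)
next
  case False
  hence v: "rat_pval p (x + y) \<ge> min (rat_pval p x) (rat_pval p y)" using pval_add[OF p] by auto
  have p1: "real p > 1" using p prime_gt_1_nat by simp
  have "real p powi (- rat_pval p (x + y)) \<le> real p powi (- min (rat_pval p x) (rat_pval p y))"
    using v p1 by (intro power_int_increasing) auto
  also have "\<dots> = max (real p powi (- rat_pval p x)) (real p powi (- rat_pval p y))"
  proof (cases "rat_pval p x \<le> rat_pval p y")
    case True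
    hence "real p powi (- rat_pval p y) \<le> real p powi (- rat_pval p x)"
      using p1 by (intro power_int_increasing) auto
    thus ?thesis using True by (simp add: min_def max_def)
  next
    case False
    hence "real p powi (- rat_pval p x) \<le> real p powi (- rat_pval p y)"
      using p1 by (intro power_int_increasing) auto
    thus ?thesis using False by (simp add: min_def max_def)
  qed
  finally show ?thesis using False by (simp add: rat_pabs_def)
qed

lemma pabs_diff_ultra: "prime p \<Longrightarrow> rat_pabs p (x - z) \<le> max (rat_pabs p (x - y)) (rat_pabs p (y - z))"
  using pabs_ultra[of p "x - y" "y - z"] by simp

lemma pabs_triangle: "prime p \<Longrightarrow> rat_pabs p (x + y) \<le> rat_pabs p x + rat_pabs p y"
  using pabs_ultra[of p x y] pabs_nonneg[of p x] pabs_nonneg[of p y] by linarith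

lemma pabs_ultra_eq: assumes p: "prime p" and lt: "rat_pabs p (x - y) < rat_pabs p y"
  shows "rat_pabs p x = rat_pabs p y"
proof -
  have "rat_pabs p x \<le> max (rat_pabs p (x - y)) (rat_pabs p y)"
    using pabs_ultra[OF p, of "x - y" y] by simp
  hence 1: "rat_pabs p x \<le> rat_pabs p y" using lt by simp
  have "rat_pabs p y \<le> max (rat_pabs p (y - x)) (rat_pabs p x)"
    using pabs_ultra[OF p, of "y - x" x] by simp
  moreover have "rat_pabs p (y - x) = rat_pabs p (x - y)" using pabs_minus[OF p, of "x - y"] by simp
  ultimately have "rat_pabs p y \<le> rat_pabs p x" using lt by (auto simp: max_def split: if_splits)
  thus ?thesis using 1 by simp
qed

lemma pabs_abs_diff: assumes p: "prime p"
  shows "\<bar>rat_pabs p x - rat_pabs p y\<bar> \<le> rat_pabs p (x - y)"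
proof -
  have "rat_pabs p x \<le> rat_pabs p (x - y) + rat_pabs p y" using pabs_triangle[OF p, of "x-y" y] by simp
  moreover have "rat_pabs p y \<le> rat_pabs p (y - x) + rat_pabs p x" using pabs_triangle[OF p, of "y-x" x] by simp
  moreover have "rat_pabs p (y - x) = rat_pabs p (x - y)" using pabs_minus[OF p, of "x - y"] by simp
  ultimately show ?thesis by linarith
qed

lemma pabs_int: assumes p: "prime p" and n: "n \<noteq> 0"
  shows "rat_pabs p (of_int n) = real p powi (- int (multiplicity (int p) n))"
  using pval_frac[OF p n, of 1] n by (simp add: rat_pabs_def)

lemma pabs_int_le1: assumes p: "prime p" shows "rat_pabs p (of_int n) \<le> 1"
proof (cases "n = 0")
  case False
  have p1: "real p \<ge> 1" using prime_ge_1_nat[OF p] by simp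
  have "real p powi (- int (multiplicity (int p) n)) \<le> real p powi 0"
    using p1 by (intro power_int_increasing) auto
  thus ?thesis using pabs_int[OF p False] by simp
qed simp

lemma pabs_int_dvd: assumes p: "prime p" and d: "int p ^ k dvd n"
  shows "rat_pabs p (of_int n) \<le> real p powi (- int k)"
proof (cases "n = 0")
  case True thus ?thesis by simp
next
  case False
  have "multiplicity (int p) n \<ge> k" using d False p by (intro multiplicity_geI) (auto simp: prime_int_iff)
  moreover have p1: "real p > 1" using p prime_gt_1_nat by simp
  ultimately have "real p powi (- int (multiplicity (int p) n)) \<le> real p powi (- int k)"
    by (intro power_int_increasing) auto
  thus ?thesis using pabs_int[OF p False] by simp
qed

lemma pabs_int_notdvd: assumes p: "prime p" and d: "\<not> int p dvd n"
  shows "rat_pabs p (of_int n) = 1"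
proof -
  have n: "n \<noteq> 0" using d by auto
  have "multiplicity (int p) n = 0" using d by (simp add: not_dvd_imp_multiplicity_0)
  thus ?thesis using pabs_int[OF p n] by simp
qed

lemma pabs_nat_prime_self: assumes p: "prime p" shows "rat_pabs p (of_nat p) = 1 / real p"
proof -
  have "multiplicity (int p) (int p) = 1" using p
    using multiplicity_prime_power[of "int p" 1] by simp
  thus ?thesis using pabs_int[OF p, of "int p"] p by (simp add: prime_gt_0_nat power_int_minus inverse_eq_divide)
qed

lemma pabs_nat_prime_other: assumes p: "prime p" and l: "prime l" and ne: "l \<noteq> p"
  shows "rat_pabs p (of_nat l) = 1"
proof -
  have "\<not> int p dvd int l" using p l ne primes_dvd_imp_eq[of p l] by auto
  thus ?thesis using pabs_int_notdvd[OF p, of "int l"] by simp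
qed

lemma pabs_one[simp]: "prime p \<Longrightarrow> rat_pabs p 1 = 1"
  using pabs_int_notdvd[of p 1] prime_gt_1_nat[of p] by auto

lemma pabs_inverse: assumes p: "prime p" shows "rat_pabs p (inverse x) = inverse (rat_pabs p x)"
proof (cases "x = 0")
  case False
  have "rat_pabs p (inverse x) * rat_pabs p x = 1" using pabs_mult[OF p, of "inverse x" x] False p by simp
  thus ?thesis using pabs_pos[OF p False] by (simp add: field_simps inverse_eq_divide)
qed simp

lemma pabs_divide: "prime p \<Longrightarrow> rat_pabs p (x / y) = rat_pabs p x / rat_pabs p y"
  by (simp add: divide_inverse pabs_mult pabs_inverse)

lemma pabs_power: "prime p \<Longrightarrow> rat_pabs p (x ^ n) = rat_pabs p x ^ n"
  by (induction n) (auto simp: pabs_mult)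

lemma pabs_powi: "prime p \<Longrightarrow> rat_pabs p (x powi k) = rat_pabs p x powi k"
  by (cases "k \<ge> 0")
     (auto simp: power_int_def pabs_power pabs_inverse)

lemma pabs_value: "prime p \<Longrightarrow> x \<noteq> 0 \<Longrightarrow> rat_pabs p x = real p powi (- rat_pval p x)"
  by (simp add: rat_pabs_def)


context
  fixes p :: nat
  assumes p: "prime p"
begin

lemma cauchy_conv_abs: assumes s: "padic_cauchy p s"
  shows "convergent (\<lambda>n. rat_pabs p (s n))"
proof -
  have "Cauchy (\<lambda>n. rat_pabs p (s n))"
  proof (rule CauchyI)
    fix e :: real assume e: "e > 0"
    then obtain N where N: "\<forall>m\<ge>N. \<forall>n\<ge>N. rat_pabs p (s m - s n) < e"
      using s unfolding padic_cauchy_def by blast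
    show "\<exists>M. \<forall>m\<ge>M. \<forall>n\<ge>M. norm (rat_pabs p (s m) - rat_pabs p (s n)) < e"
    proof (intro exI[of _ N] allI impI)
      fix m n assume "N \<le> m" "N \<le> n"
      hence "rat_pabs p (s m - s n) < e" using N by blast
      thus "norm (rat_pabs p (s m) - rat_pabs p (s n)) < e" using pabs_abs_diff[OF p, of "s m" "s n"] by simp
    qed
  qed
  thus ?thesis by (simp add: Cauchy_convergent_iff)
qed

lemma pabs_swap: "rat_pabs p (a - b) = rat_pabs p (b - a)"
  using pabs_minus[OF p, of "a - b"] by simp

lemma cauchy_const: "padic_cauchy p (\<lambda>n. c)"
  unfolding padic_cauchy_def by auto

lemma cauchy_diff: assumes s: "padic_cauchy p s" and t: "padic_cauchy p t"
  shows "padic_cauchy p (\<lambda>n. s n - t n)"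
  unfolding padic_cauchy_def
proof (intro allI impI)
  fix e :: real assume e: "e > 0"
  obtain N1 where N1: "\<forall>m\<ge>N1. \<forall>n\<ge>N1. rat_pabs p (s m - s n) < e"
    using s e unfolding padic_cauchy_def by blast
  obtain N2 where N2: "\<forall>m\<ge>N2. \<forall>n\<ge>N2. rat_pabs p (t m - t n) < e"
    using t e unfolding padic_cauchy_def by blast
  show "\<exists>N. \<forall>m\<ge>N. \<forall>n\<ge>N. rat_pabs p (s m - t m - (s n - t n)) < e"
  proof (intro exI[of _ "max N1 N2"] allI impI)
    fix m n assume "max N1 N2 \<le> m" "max N1 N2 \<le> n"
    hence a: "rat_pabs p (s m - s n) < e" "rat_pabs p (t m - t n) < e" using N1 N2 by auto
    have "rat_pabs p ((s m - s n) + (t n - t m)) \<le> max (rat_pabs p (s m - s n)) (rat_pabs p (t n - t m))"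
      by (rule pabs_ultra[OF p])
    moreover have e2: "s m - t m - (s n - t n) = (s m - s n) + (t n - t m)" by simp
    moreover have "rat_pabs p (t n - t m) = rat_pabs p (t m - t n)" by (rule pabs_swap)
    ultimately show "rat_pabs p (s m - t m - (s n - t n)) < e" using a unfolding e2
      by (metis le_less_trans max_less_iff_conj)
  qed
qed

lemma cauchy_smult: assumes s: "padic_cauchy p s"
  shows "padic_cauchy p (\<lambda>n. q * s n)"
  unfolding padic_cauchy_def
proof (intro allI impI)
  fix e :: real assume e: "e > 0"
  have qp: "rat_pabs p q + 1 > 0" using pabs_nonneg[of p q] by linarith
  obtain N where N: "\<forall>m\<ge>N. \<forall>n\<ge>N. rat_pabs p (s m - s n) < e / (rat_pabs p q + 1)"
    using s e qp unfolding padic_cauchy_def by (meson divide_pos_pos)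
  show "\<exists>N. \<forall>m\<ge>N. \<forall>n\<ge>N. rat_pabs p (q * s m - q * s n) < e"
  proof (intro exI[of _ N] allI impI)
    fix m n assume "N \<le> m" "N \<le> n"
    hence a: "rat_pabs p (s m - s n) * (rat_pabs p q + 1) < e" using N qp by (simp add: pos_less_divide_eq)
    have "rat_pabs p (q * s m - q * s n) = rat_pabs p q * rat_pabs p (s m - s n)"
      using pabs_mult[OF p, of q "s m - s n"] by (simp add: algebra_simps)
    also have "\<dots> \<le> rat_pabs p (s m - s n) * (rat_pabs p q + 1)"
      using pabs_nonneg[of p] by (simp add: algebra_simps)
    finally show "rat_pabs p (q * s m - q * s n) < e" using a by linarith
  qed
qed

lemma equiv_refl: "padic_equiv p s s"
  unfolding padic_equiv_def by simp

lemma equiv_sym: "padic_equiv p s t \<Longrightarrow> padic_equiv p t s"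
  unfolding padic_equiv_def by (subst pabs_swap) simp

lemma equiv_trans: assumes "padic_equiv p s t" "padic_equiv p t u" shows "padic_equiv p s u"
  unfolding padic_equiv_def
proof (rule tendsto_sandwich[of "\<lambda>n. 0"])
  show "\<forall>\<^sub>F n in sequentially. 0 \<le> rat_pabs p (s n - u n)" by (simp add: pabs_nonneg)
  show "\<forall>\<^sub>F n in sequentially. rat_pabs p (s n - u n) \<le> rat_pabs p (s n - t n) + rat_pabs p (t n - u n)"
  proof (intro always_eventually allI)
    fix n
    have "s n - u n = (s n - t n) + (t n - u n)" by simp
    thus "rat_pabs p (s n - u n) \<le> rat_pabs p (s n - t n) + rat_pabs p (t n - u n)"
      using pabs_triangle[OF p, of "s n - t n" "t n - u n"] by simp
  qed
  have "(\<lambda>n. rat_pabs p (s n - t n) + rat_pabs p (t n - u n)) \<longlonglongrightarrow> 0 + 0"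
    using assms unfolding padic_equiv_def by (intro tendsto_add)
  thus "(\<lambda>n. rat_pabs p (s n - t n) + rat_pabs p (t n - u n)) \<longlonglongrightarrow> 0" by simp
qed simp

lemma equiv_lim_same:
  assumes e: "padic_equiv p s s'" and c: "(\<lambda>n. rat_pabs p (s n - t n)) \<longlonglongrightarrow> L"
  shows "(\<lambda>n. rat_pabs p (s' n - t n)) \<longlonglongrightarrow> L"
proof -
  have d: "(\<lambda>n. rat_pabs p (s' n - t n) - rat_pabs p (s n - t n)) \<longlonglongrightarrow> 0"
  proof (rule tendsto_sandwich[of "\<lambda>n. - rat_pabs p (s n - s' n)" _ _ "\<lambda>n. rat_pabs p (s n - s' n)"])
    have b: "\<And>n. \<bar>rat_pabs p (s' n - t n) - rat_pabs p (s n - t n)\<bar> \<le> rat_pabs p (s n - s' n)"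
    proof -
      fix n
      have "\<bar>rat_pabs p (s' n - t n) - rat_pabs p (s n - t n)\<bar> \<le> rat_pabs p ((s' n - t n) - (s n - t n))"
        by (rule pabs_abs_diff[OF p])
      also have "\<dots> = rat_pabs p (s n - s' n)" using pabs_minus[OF p, of "s n - s' n"] by simp
      finally show "?thesis n" .
    qed
    show "\<forall>\<^sub>F n in sequentially. - rat_pabs p (s n - s' n) \<le> rat_pabs p (s' n - t n) - rat_pabs p (s n - t n)"
    proof (intro always_eventually allI)
      fix n show "- rat_pabs p (s n - s' n) \<le> rat_pabs p (s' n - t n) - rat_pabs p (s n - t n)"
        using b[of n] unfolding abs_le_iff by linarith
    qed
    show "\<forall>\<^sub>F n in sequentially. rat_pabs p (s' n - t n) - rat_pabs p (s n - t n) \<le> rat_pabs p (s n - s' n)"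
    proof (intro always_eventually allI)
      fix n show "rat_pabs p (s' n - t n) - rat_pabs p (s n - t n) \<le> rat_pabs p (s n - s' n)"
        using b[of n] unfolding abs_le_iff by linarith
    qed
    show "(\<lambda>n. - rat_pabs p (s n - s' n)) \<longlonglongrightarrow> 0"
      using tendsto_minus[OF e[unfolded padic_equiv_def]] by simp
    show "(\<lambda>n. rat_pabs p (s n - s' n)) \<longlonglongrightarrow> 0" using e unfolding padic_equiv_def .
  qed
  have "(\<lambda>n. (rat_pabs p (s' n - t n) - rat_pabs p (s n - t n)) + rat_pabs p (s n - t n)) \<longlonglongrightarrow> 0 + L"
    by (intro tendsto_add d c)
  thus ?thesis by simp
qed

lemma equiv_lim_same2:
  assumes e: "padic_equiv p t t'" and c: "(\<lambda>n. rat_pabs p (s n - t n)) \<longlonglongrightarrow> L"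
  shows "(\<lambda>n. rat_pabs p (s n - t' n)) \<longlonglongrightarrow> L"
proof -
  have c': "(\<lambda>n. rat_pabs p (t n - s n)) \<longlonglongrightarrow> L"
    using c by (subst pabs_swap) simp
  have "(\<lambda>n. rat_pabs p (t' n - s n)) \<longlonglongrightarrow> L" by (rule equiv_lim_same[OF e c'])
  thus ?thesis by (subst pabs_swap) simp
qed

lemma cauchy_diff_conv: assumes "padic_cauchy p s" "padic_cauchy p t"
  shows "(\<lambda>n. rat_pabs p (s n - t n)) \<longlonglongrightarrow> lim (\<lambda>n. rat_pabs p (s n - t n))"
  using cauchy_conv_abs[OF cauchy_diff[OF assms]] by (simp add: convergent_LIMSEQ_iff)

lemma cauchy_abs_conv: assumes "padic_cauchy p s"
  shows "(\<lambda>n. rat_pabs p (s n)) \<longlonglongrightarrow> lim (\<lambda>n. rat_pabs p (s n))"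
  using cauchy_conv_abs[OF assms] by (simp add: convergent_LIMSEQ_iff)

lemma class_mem: "padic_cauchy p s \<Longrightarrow> s \<in> padic_class p s"
  unfolding padic_class_def by (simp add: equiv_refl)

lemma class_eq_iff: assumes "padic_cauchy p s" "padic_cauchy p t"
  shows "padic_class p s = padic_class p t \<longleftrightarrow> padic_equiv p s t"
proof
  assume "padic_class p s = padic_class p t"
  hence "t \<in> padic_class p s" using class_mem[OF assms(2)] by simp
  thus "padic_equiv p s t" unfolding padic_class_def by simp
next
  assume st: "padic_equiv p s t"
  show "padic_class p s = padic_class p t"
    unfolding padic_class_def using st equiv_sym equiv_trans by blast
qed

lemma class_in_Qp: "padic_cauchy p s \<Longrightarrow> padic_class p s \<in> Qp p"
  unfolding Qp_def by blast

lemma Qp_some: assumes x: "x \<in> Qp p"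
  shows "(SOME s. s \<in> x) \<in> x" "padic_cauchy p (SOME s. s \<in> x)" "x = padic_class p (SOME s. s \<in> x)"
proof -
  obtain s0 where s0: "padic_cauchy p s0" "x = padic_class p s0" using x unfolding Qp_def by blast
  have "s0 \<in> x" using s0 class_mem by simp
  thus 1: "(SOME s. s \<in> x) \<in> x" by (rule someI[where x=s0])
  thus 2: "padic_cauchy p (SOME s. s \<in> x)" using s0 unfolding padic_class_def by simp
  have "padic_equiv p s0 (SOME s. s \<in> x)" using 1 s0 unfolding padic_class_def by simp
  thus "x = padic_class p (SOME s. s \<in> x)" using s0 2 class_eq_iff by simp
qed

lemma class_some_equiv: assumes s: "padic_cauchy p s"
  shows "padic_equiv p s (SOME t. t \<in> padic_class p s)"
  using Qp_some(1)[OF class_in_Qp[OF s]] unfolding padic_class_def by simp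

lemma dist_class_tendsto: assumes s: "padic_cauchy p s" and t: "padic_cauchy p t"
  shows "(\<lambda>n. rat_pabs p (s n - t n)) \<longlonglongrightarrow> padic_dist p (padic_class p s) (padic_class p t)"
proof -
  define s' where "s' = (SOME u. u \<in> padic_class p s)"
  define t' where "t' = (SOME u. u \<in> padic_class p t)"
  have s': "padic_cauchy p s'" using Qp_some(2)[OF class_in_Qp[OF s]] s'_def by simp
  have t': "padic_cauchy p t'" using Qp_some(2)[OF class_in_Qp[OF t]] t'_def by simp
  have c: "(\<lambda>n. rat_pabs p (s' n - t' n)) \<longlonglongrightarrow> padic_dist p (padic_class p s) (padic_class p t)"
    using cauchy_diff_conv[OF s' t'] unfolding padic_dist_def s'_def t'_def .
  have "(\<lambda>n. rat_pabs p (s n - t' n)) \<longlonglongrightarrow> padic_dist p (padic_class p s) (padic_class p t)"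
    by (rule equiv_lim_same[OF equiv_sym[OF class_some_equiv[OF s, folded s'_def]] c])
  thus ?thesis
    by (rule equiv_lim_same2[OF equiv_sym[OF class_some_equiv[OF t, folded t'_def]]])
qed

lemma abs_class_tendsto: assumes s: "padic_cauchy p s"
  shows "(\<lambda>n. rat_pabs p (s n)) \<longlonglongrightarrow> padic_abs p (padic_class p s)"
proof -
  define s' where "s' = (SOME u. u \<in> padic_class p s)"
  have s': "padic_cauchy p s'" using Qp_some(2)[OF class_in_Qp[OF s]] s'_def by simp
  have c: "(\<lambda>n. rat_pabs p (s' n - 0)) \<longlonglongrightarrow> padic_abs p (padic_class p s)"
    using cauchy_abs_conv[OF s'] unfolding padic_abs_def s'_def by simp
  have "(\<lambda>n. rat_pabs p (s n - 0)) \<longlonglongrightarrow> padic_abs p (padic_class p s)"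
    by (rule equiv_lim_same[OF equiv_sym[OF class_some_equiv[OF s, folded s'_def]] c])
  thus ?thesis by simp
qed

lemma smult_class: assumes s: "padic_cauchy p s"
  shows "padic_smult p q (padic_class p s) = padic_class p (\<lambda>n. q * s n)"
proof -
  have "padic_equiv p (\<lambda>n. q * s' n) (\<lambda>n. q * s n)" if "s' \<in> padic_class p s" for s'
  proof -
    have e: "padic_equiv p s s'" using that unfolding padic_class_def by simp
    have "(\<lambda>n. rat_pabs p q * rat_pabs p (s n - s' n)) \<longlonglongrightarrow> rat_pabs p q * 0"
      using e unfolding padic_equiv_def by (intro tendsto_mult) auto
    hence "(\<lambda>n. rat_pabs p (q * s n - q * s' n)) \<longlonglongrightarrow> 0"
      using pabs_mult[OF p] by (simp add: right_diff_distrib[symmetric])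
    thus ?thesis unfolding padic_equiv_def by (subst pabs_swap) simp
  qed
  hence 1: "\<And>s'. s' \<in> padic_class p s \<Longrightarrow> padic_equiv p (\<lambda>n. q * s' n) (\<lambda>n. q * s n)" .
  show ?thesis unfolding padic_smult_def
  proof (intro set_eqI iffI)
    fix t assume "t \<in> {t. padic_cauchy p t \<and> (\<exists>s'\<in>padic_class p s. padic_equiv p (\<lambda>n. q * s' n) t)}"
    then obtain s' where a: "padic_cauchy p t" "s' \<in> padic_class p s" "padic_equiv p (\<lambda>n. q * s' n) t" by blast
    have "padic_equiv p (\<lambda>n. q * s n) t" using equiv_trans[OF equiv_sym[OF 1[OF a(2)]] a(3)] .
    thus "t \<in> padic_class p (\<lambda>n. q * s n)" unfolding padic_class_def using a(1) by simp
  next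
    fix t assume "t \<in> padic_class p (\<lambda>n. q * s n)"
    then show "t \<in> {t. padic_cauchy p t \<and> (\<exists>s'\<in>padic_class p s. padic_equiv p (\<lambda>n. q * s' n) t)}"
    proof -
      assume "t \<in> padic_class p (\<lambda>n. q * s n)"
      hence "padic_cauchy p t" "padic_equiv p (\<lambda>n. q * s n) t" unfolding padic_class_def by auto
      thus ?thesis using class_mem[OF s] by blast
    qed
  qed
qed

end

context
  fixes p :: nat
  assumes p: "prime p"
begin

lemma Qp_obtain: assumes "x \<in> Qp p" obtains s where "padic_cauchy p s" "x = padic_class p s"
  using assms unfolding Qp_def by blast

lemma zero_in_Qp: "padic_zero p \<in> Qp p"
  unfolding padic_zero_def by (rule class_in_Qp[OF p cauchy_const[OF p]])

lemma dist_class: assumes "padic_cauchy p s" "padic_cauchy p t" shows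
   "padic_dist p (padic_class p s) (padic_class p t) = lim (\<lambda>n. rat_pabs p (s n - t n))"
  using limI[OF dist_class_tendsto[OF p assms]] by simp

lemma abs_class: assumes "padic_cauchy p s" shows
   "padic_abs p (padic_class p s) = lim (\<lambda>n. rat_pabs p (s n))"
  using limI[OF abs_class_tendsto[OF p assms]] by simp

lemma abs_const: "padic_abs p (padic_class p (\<lambda>n. c)) = rat_pabs p c"
  using LIMSEQ_unique[OF abs_class_tendsto[OF p cauchy_const[OF p, of c]] tendsto_const] by simp

lemma dist_nonneg: assumes "x \<in> Qp p" "y \<in> Qp p" shows "padic_dist p x y \<ge> 0"
proof -
  obtain s where s: "padic_cauchy p s" "x = padic_class p s" using Qp_obtain[OF assms(1)] by blast
  obtain t where t: "padic_cauchy p t" "y = padic_class p t" using Qp_obtain[OF assms(2)] by blast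
  note st = s t
  show ?thesis using LIMSEQ_le[OF tendsto_const dist_class_tendsto[OF p st(1,3)]] st pabs_nonneg by auto
qed

lemma abs_nonneg: assumes "x \<in> Qp p" shows "padic_abs p x \<ge> 0"
proof -
  obtain s where st: "padic_cauchy p s" "x = padic_class p s" using Qp_obtain[OF assms] by blast
  show ?thesis using LIMSEQ_le[OF tendsto_const abs_class_tendsto[OF p st(1)]] st pabs_nonneg by auto
qed

lemma dist_sym: assumes "x \<in> Qp p" "y \<in> Qp p" shows "padic_dist p x y = padic_dist p y x"
proof -
  obtain s where s: "padic_cauchy p s" "x = padic_class p s" using Qp_obtain[OF assms(1)] by blast
  obtain t where t: "padic_cauchy p t" "y = padic_class p t" using Qp_obtain[OF assms(2)] by blast
  note st = s t
  have "(\<lambda>n. rat_pabs p (s n - t n)) = (\<lambda>n. rat_pabs p (t n - s n))" using pabs_swap[OF p] by auto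
  thus ?thesis using st dist_class by simp
qed

lemma dist_self: assumes "x \<in> Qp p" shows "padic_dist p x x = 0"
proof -
  obtain s where st: "padic_cauchy p s" "x = padic_class p s" using Qp_obtain[OF assms] by blast
  thus ?thesis using dist_class[OF st(1) st(1)] by simp
qed

lemma dist_eq0_iff: assumes "x \<in> Qp p" "y \<in> Qp p" shows "padic_dist p x y = 0 \<longleftrightarrow> x = y"
proof -
  obtain s where s: "padic_cauchy p s" "x = padic_class p s" using Qp_obtain[OF assms(1)] by blast
  obtain t where t: "padic_cauchy p t" "y = padic_class p t" using Qp_obtain[OF assms(2)] by blast
  note st = s t
  have "padic_dist p x y = 0 \<longleftrightarrow> padic_equiv p s t"
  proof
    assume d: "padic_dist p x y = 0"
    show "padic_equiv p s t" unfolding padic_equiv_def using dist_class_tendsto[OF p st(1,3)] st d by simp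
  next
    assume "padic_equiv p s t"
    thus "padic_dist p x y = 0" unfolding padic_equiv_def
      using LIMSEQ_unique[OF dist_class_tendsto[OF p st(1,3)]] st by simp
  qed
  thus ?thesis using class_eq_iff[OF p st(1,3)] st by simp
qed

lemma dist_ultra: assumes "x \<in> Qp p" "y \<in> Qp p" "z \<in> Qp p"
  shows "padic_dist p x z \<le> max (padic_dist p x y) (padic_dist p y z)"
proof -
  obtain s where s: "padic_cauchy p s" "x = padic_class p s" using Qp_obtain[OF assms(1)] by blast
  obtain t where t: "padic_cauchy p t" "y = padic_class p t" using Qp_obtain[OF assms(2)] by blast
  obtain u where u: "padic_cauchy p u" "z = padic_class p u" using Qp_obtain[OF assms(3)] by blast
  note st = s t u
  have "(\<lambda>n. max (rat_pabs p (s n - t n)) (rat_pabs p (t n - u n))) \<longlonglongrightarrow> max (padic_dist p x y) (padic_dist p y z)"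
    unfolding st(2,4,6) by (intro tendsto_max dist_class_tendsto[OF p st(1,3)] dist_class_tendsto[OF p st(3,5)])
  moreover have "\<forall>n. rat_pabs p (s n - u n) \<le> max (rat_pabs p (s n - t n)) (rat_pabs p (t n - u n))"
    using pabs_diff_ultra[OF p] by blast
  ultimately have "padic_dist p (padic_class p s) (padic_class p u) \<le> max (padic_dist p x y) (padic_dist p y z)"
    by (intro LIMSEQ_le[OF dist_class_tendsto[OF p st(1,5)]]) auto
  thus ?thesis using st by simp
qed

lemma dist_triangle: assumes "x \<in> Qp p" "y \<in> Qp p" "z \<in> Qp p"
  shows "padic_dist p x z \<le> padic_dist p x y + padic_dist p y z"
proof -
  have "max (padic_dist p x y) (padic_dist p y z) \<le> padic_dist p x y + padic_dist p y z"
    using dist_nonneg[OF assms(1,2)] dist_nonneg[OF assms(2,3)] by (simp add: max_def)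
  thus ?thesis using dist_ultra[OF assms] by linarith
qed

lemma dist_zero_left: assumes "y \<in> Qp p" shows "padic_dist p (padic_zero p) y = padic_abs p y"
proof -
  obtain t where st: "padic_cauchy p t" "y = padic_class p t" using Qp_obtain[OF assms] by blast
  have "(\<lambda>n. rat_pabs p (0 - t n)) \<longlonglongrightarrow> padic_dist p (padic_zero p) y"
    using dist_class_tendsto[OF p cauchy_const[OF p, of 0] st(1)] st unfolding padic_zero_def by simp
  moreover have "(\<lambda>n. rat_pabs p (0 - t n)) = (\<lambda>n. rat_pabs p (t n))" using pabs_minus[OF p] by simp
  ultimately have "(\<lambda>n. rat_pabs p (t n)) \<longlonglongrightarrow> padic_dist p (padic_zero p) y" by simp
  thus ?thesis using LIMSEQ_unique[OF abs_class_tendsto[OF p st(1)]] st by simp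
qed

lemma abs_le_max_dist: assumes "x \<in> Qp p" "y \<in> Qp p"
  shows "padic_abs p y \<le> max (padic_abs p x) (padic_dist p x y)"
  using dist_ultra[OF zero_in_Qp assms] dist_zero_left assms by simp

lemma smult_in_Qp: assumes "x \<in> Qp p" shows "padic_smult p q x \<in> Qp p"
proof -
  obtain s where st: "padic_cauchy p s" "x = padic_class p s" using Qp_obtain[OF assms] by blast
  thus ?thesis using smult_class[OF p st(1)] class_in_Qp[OF p cauchy_smult[OF p st(1)]] by simp
qed

lemma abs_smult: assumes "x \<in> Qp p" shows "padic_abs p (padic_smult p q x) = rat_pabs p q * padic_abs p x"
proof -
  obtain s where st: "padic_cauchy p s" "x = padic_class p s" using Qp_obtain[OF assms] by blast
  have "(\<lambda>n. rat_pabs p q * rat_pabs p (s n)) \<longlonglongrightarrow> rat_pabs p q * padic_abs p x"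
    unfolding st(2) by (intro tendsto_mult tendsto_const abs_class_tendsto[OF p st(1)])
  moreover have "(\<lambda>n. rat_pabs p (q * s n)) \<longlonglongrightarrow> padic_abs p (padic_smult p q x)"
    using abs_class_tendsto[OF p cauchy_smult[OF p st(1)]] smult_class[OF p st(1)] st by simp
  ultimately show ?thesis using pabs_mult[OF p] LIMSEQ_unique[of "\<lambda>n. rat_pabs p (q * s n)"] by simp
qed

lemma smult_one: assumes "x \<in> Qp p" shows "padic_smult p 1 x = x"
proof -
  obtain s where st: "padic_cauchy p s" "x = padic_class p s" using Qp_obtain[OF assms] by blast
  thus ?thesis using smult_class[OF p st(1), of 1] by simp
qed

lemma smult_smult: assumes "x \<in> Qp p" shows "padic_smult p q (padic_smult p r x) = padic_smult p (q * r) x"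
proof -
  obtain s where st: "padic_cauchy p s" "x = padic_class p s" using Qp_obtain[OF assms] by blast
  thus ?thesis using smult_class[OF p st(1)] smult_class[OF p cauchy_smult[OF p st(1)]]
    by (simp add: mult.assoc)
qed

lemma smult_zero: "padic_smult p q (padic_zero p) = padic_zero p"
  unfolding padic_zero_def using smult_class[OF p cauchy_const[OF p], of q 0] by simp

lemma abs_zero: "padic_abs p (padic_zero p) = 0"
  unfolding padic_zero_def using abs_const by simp

lemma abs_eq0_iff: assumes "x \<in> Qp p" shows "padic_abs p x = 0 \<longleftrightarrow> x = padic_zero p"
  using dist_zero_left[OF assms] dist_eq0_iff[OF zero_in_Qp assms] by auto

lemma smult_eq_zero_iff: assumes "x \<in> Qp p" "q \<noteq> 0"
  shows "padic_smult p q x = padic_zero p \<longleftrightarrow> x = padic_zero p"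
proof -
  have "padic_smult p q x = padic_zero p \<longleftrightarrow> padic_abs p (padic_smult p q x) = 0"
    using abs_eq0_iff[OF smult_in_Qp[OF assms(1)]] by simp
  also have "\<dots> \<longleftrightarrow> padic_abs p x = 0" using abs_smult[OF assms(1)] pabs_pos[OF p assms(2)] by simp
  also have "\<dots> \<longleftrightarrow> x = padic_zero p" using abs_eq0_iff[OF assms(1)] .
  finally show ?thesis .
qed

lemma abs_eventually_const:
  assumes s: "padic_cauchy p s" and nz: "padic_class p s \<noteq> padic_zero p"
  shows "\<exists>N. \<forall>n\<ge>N. rat_pabs p (s n) = padic_abs p (padic_class p s) \<and> s n \<noteq> 0"
proof -
  define L where "L = padic_abs p (padic_class p s)"
  have L0: "L > 0" using abs_nonneg[OF class_in_Qp[OF p s]] abs_eq0_iff[OF class_in_Qp[OF p s]] nz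
    unfolding L_def by auto
  have tl: "(\<lambda>n. rat_pabs p (s n)) \<longlonglongrightarrow> L" using abs_class_tendsto[OF p s] L_def by simp
  have "eventually (\<lambda>n. rat_pabs p (s n) > L/2) sequentially"
    using order_tendstoD(1)[OF tl, of "L/2"] L0 by simp
  then obtain N1 where N1: "\<forall>n\<ge>N1. rat_pabs p (s n) > L/2" unfolding eventually_sequentially by blast
  have L2: "L/2 > 0" using L0 by simp
  obtain N2 where N2: "\<forall>m\<ge>N2. \<forall>n\<ge>N2. rat_pabs p (s m - s n) < L/2"
    using s L2 unfolding padic_cauchy_def by blast
  define N where "N = max N1 N2"
  have c: "\<forall>n\<ge>N. rat_pabs p (s n) = rat_pabs p (s N)"
  proof (intro allI impI)
    fix n assume "n \<ge> N"
    hence "n \<ge> N2" "N \<ge> N2" "N \<ge> N1" unfolding N_def by auto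
    hence "rat_pabs p (s n - s N) < L/2" "L/2 < rat_pabs p (s N)"
      using N1[rule_format, of N] N2[rule_format, of n N] by auto
    hence "rat_pabs p (s n - s N) < rat_pabs p (s N)" by linarith
    thus "rat_pabs p (s n) = rat_pabs p (s N)" by (rule pabs_ultra_eq[OF p])
  qed
  have "(\<lambda>n. rat_pabs p (s n)) \<longlonglongrightarrow> rat_pabs p (s N)"
    by (rule tendsto_eventually) (unfold eventually_sequentially, use c in blast)
  hence LN: "L = rat_pabs p (s N)" using LIMSEQ_unique[OF tl] by blast
  have nz: "s n \<noteq> 0" if "n \<ge> N" for n
  proof -
    have "rat_pabs p (s n) = L" using c[rule_format, OF that] LN by simp
    hence "rat_pabs p (s n) \<noteq> 0" using L0 by simp
    thus ?thesis by (auto simp: pabs_zero)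
  qed
  show ?thesis
  proof (intro exI[of _ N] allI impI conjI)
    fix n assume n: "N \<le> n"
    have "rat_pabs p (s n) = L" using c[rule_format, OF n] LN by simp
    thus "rat_pabs p (s n) = padic_abs p (padic_class p s)" using L_def by simp
    show "s n \<noteq> 0" using nz[OF n] .
  qed
qed

lemma abs_is_power: assumes x: "x \<in> Qp p" and nz: "x \<noteq> padic_zero p"
  shows "\<exists>k. padic_abs p x = real p powi k"
proof -
  obtain s where st: "padic_cauchy p s" "x = padic_class p s" using Qp_obtain[OF x] by blast
  obtain N where "\<forall>n\<ge>N. rat_pabs p (s n) = padic_abs p x \<and> s n \<noteq> 0"
    using abs_eventually_const[OF st(1)] nz st by auto
  hence "padic_abs p x = rat_pabs p (s N)" "s N \<noteq> 0" by auto
  thus ?thesis by (auto simp: rat_pabs_def)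
qed

lemma powi_inj: "real p powi a = real p powi b \<Longrightarrow> a = b"
proof -
  assume h: "real p powi a = real p powi b"
  have p1: "real p > 1" using prime_gt_1_nat[OF p] by simp
  show "a = b"
  proof (rule ccontr)
    assume "a \<noteq> b"
    hence "a < b \<or> b < a" by linarith
    thus False
    proof
      assume "a < b" thus False using power_int_strict_increasing[OF _ p1, of a b] h by simp
    next
      assume "b < a" thus False using power_int_strict_increasing[OF _ p1, of b a] h by simp
    qed
  qed
qed

lemma padic_val_eq: assumes x: "x \<in> Qp p" and nz: "x \<noteq> padic_zero p"
  shows "padic_abs p x = real p powi (- padic_val p x)"
proof -
  obtain k where k: "padic_abs p x = real p powi k" using abs_is_power[OF x nz] by blast
  have "(THE k'. padic_abs p x = real p powi (- k')) = - k"
  proof (rule the_equality)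
    show "padic_abs p x = real p powi (- (- k))" using k by simp
    fix k' assume "padic_abs p x = real p powi (- k')"
    hence "real p powi (- k') = real p powi k" using k by simp
    hence "- k' = k" by (rule powi_inj)
    thus "k' = - k" by simp
  qed
  thus ?thesis unfolding padic_val_def using k by simp
qed

lemma abs_le1_power: assumes x: "x \<in> Qp p" "x \<noteq> padic_zero p" "padic_abs p x < 1"
  shows "padic_abs p x \<le> 1 / real p"
proof -
  obtain k where k: "padic_abs p x = real p powi k" using abs_is_power[OF x(1,2)] by blast
  have p1: "real p > 1" using prime_gt_1_nat[OF p] by simp
  have "k < 0"
  proof (rule ccontr)
    assume "\<not> k < 0"
    hence "real p powi 0 \<le> real p powi k" using p1 by (intro power_int_increasing) auto
    thus False using k x(3) by simp
  qed
  hence "real p powi k \<le> real p powi (-1)" using p1 by (intro power_int_increasing) auto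
  thus ?thesis using k by (simp add: power_int_minus inverse_eq_divide)
qed

lemma Zp_iff: "x \<in> Zp p \<longleftrightarrow> x \<in> Qp p \<and> padic_abs p x \<le> 1"
  unfolding Zp_def by simp

lemma Zp_units_iff: "x \<in> Zp_units p \<longleftrightarrow> x \<in> Qp p \<and> padic_abs p x = 1"
  unfolding Zp_units_def by simp

lemma zero_in_Zp: "padic_zero p \<in> Zp p"
  using zero_in_Qp abs_zero Zp_iff by simp

lemma const_in_Qp: "padic_class p (\<lambda>n. c) \<in> Qp p"
  by (rule class_in_Qp[OF p cauchy_const[OF p]])

lemma const_eq_zero_iff: "padic_class p (\<lambda>n. c) = padic_zero p \<longleftrightarrow> c = 0"
proof -
  have "padic_class p (\<lambda>n. c) = padic_zero p \<longleftrightarrow> padic_abs p (padic_class p (\<lambda>n. c)) = 0"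
    using abs_eq0_iff[OF const_in_Qp] by simp
  thus ?thesis using abs_const pabs_eq0_iff[OF p] by simp
qed

lemma dist_const: "padic_dist p (padic_class p (\<lambda>n. a)) (padic_class p (\<lambda>n. b)) = rat_pabs p (a - b)"
  using dist_class[OF cauchy_const[OF p] cauchy_const[OF p]] by simp

lemma smult_const: "padic_smult p q (padic_class p (\<lambda>n. c)) = padic_class p (\<lambda>n. q * c)"
  using smult_class[OF p cauchy_const[OF p]] by simp

lemma rat_approx: assumes x: "x \<in> Qp p" and e: "e > 0"
  shows "\<exists>c. padic_dist p x (padic_class p (\<lambda>n. c)) < e"
proof -
  obtain s where st: "padic_cauchy p s" "x = padic_class p s" using Qp_obtain[OF x] by blast
  obtain N where N: "\<forall>m\<ge>N. \<forall>n\<ge>N. rat_pabs p (s m - s n) < e / 2"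
    using st(1) e unfolding padic_cauchy_def by (meson half_gt_zero)
  have "(\<lambda>n. rat_pabs p (s n - s N)) \<longlonglongrightarrow> padic_dist p x (padic_class p (\<lambda>n. s N))"
    using dist_class_tendsto[OF p st(1) cauchy_const[OF p]] st by simp
  moreover have "\<forall>n\<ge>N. rat_pabs p (s n - s N) \<le> e / 2" using N by (simp add: less_imp_le)
  ultimately have "padic_dist p x (padic_class p (\<lambda>n. s N)) \<le> e / 2"
    using LIMSEQ_le[OF _ tendsto_const] by blast
  thus ?thesis using e by (intro exI[of _ "s N"]) simp
qed

end

definition pball :: "nat \<Rightarrow> padic \<Rightarrow> real \<Rightarrow> padic set" where
  "pball p x r = {y \<in> Qp p. padic_dist p x y < r}"

definition badset :: "adele \<Rightarrow> nat set" where
  "badset c = {p. prime p \<and> fst c p \<notin> Zp p}"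

definition abox :: "adele \<Rightarrow> nat set \<Rightarrow> real \<Rightarrow> real \<Rightarrow> adele set" where
  "abox c F r e = {a \<in> adeles. (\<forall>p. prime p \<longrightarrow> fst a p \<in> (if p \<in> F then pball p (fst c p) r else Zp p))
      \<and> snd a \<in> ball (snd c) e}"

lemma padic_topology_basis:
  "padic_topology p = topology_generated_by {pball p x r | x r. x \<in> Qp p \<and> r > 0}"
  unfolding padic_topology_def pball_def by simp

lemma pball_mono: "r \<le> r' \<Longrightarrow> pball p c r \<subseteq> pball p c r'"
  unfolding pball_def by auto

context
  fixes p :: nat
  assumes p: "prime p"
begin

lemma pball_open: "x \<in> Qp p \<Longrightarrow> r > 0 \<Longrightarrow> openin (padic_topology p) (pball p x r)"
  unfolding padic_topology_basis by (rule topology_generated_by_Basis) blast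

lemma pball_sub: assumes c: "c \<in> pball p x r" and x: "x \<in> Qp p"
  shows "pball p c (r - padic_dist p x c) \<subseteq> pball p x r"
proof
  fix y assume y: "y \<in> pball p c (r - padic_dist p x c)"
  have cq: "c \<in> Qp p" "y \<in> Qp p" using c y unfolding pball_def by auto
  have "padic_dist p x y \<le> padic_dist p x c + padic_dist p c y" by (rule dist_triangle[OF p x cq(1) cq(2)])
  thus "y \<in> pball p x r" using y cq unfolding pball_def by auto
qed

lemma pball_center: "c \<in> Qp p \<Longrightarrow> r > 0 \<Longrightarrow> c \<in> pball p c r"
  unfolding pball_def using dist_self[OF p] by simp

lemma open_contains_pball:
  assumes "openin (padic_topology p) U" "c \<in> U"
  shows "\<exists>r>0. pball p c r \<subseteq> U"
proof -
  have g: "generate_topology_on {pball p x r | x r. x \<in> Qp p \<and> r > 0} U"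
    using assms(1) unfolding padic_topology_basis by (rule openin_topology_generated_by)
  have "\<forall>c\<in>U. \<exists>r>0. pball p c r \<subseteq> U"
    using g
  proof (induction rule: generate_topology_on.induct)
    case Empty thus ?case by simp
  next
    case (Int a b)
    show ?case
    proof
      fix c assume "c \<in> a \<inter> b"
      then obtain r1 r2 where "r1 > 0" "pball p c r1 \<subseteq> a" "r2 > 0" "pball p c r2 \<subseteq> b"
        using Int.IH by blast
      moreover have "pball p c (min r1 r2) \<subseteq> pball p c r1" "pball p c (min r1 r2) \<subseteq> pball p c r2"
        using pball_mono[of "min r1 r2" r1 p c] pball_mono[of "min r1 r2" r2 p c] by auto
      ultimately show "\<exists>r>0. pball p c r \<subseteq> a \<inter> b" by (intro exI[of _ "min r1 r2"]) auto
    qed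
  next
    case (UN K)
    show ?case
    proof
      fix c assume "c \<in> \<Union>K"
      then obtain k where "k \<in> K" "c \<in> k" by blast
      thus "\<exists>r>0. pball p c r \<subseteq> \<Union>K" using UN.IH by blast
    qed
  next
    case (Basis s)
    then obtain x r where s: "s = pball p x r" "x \<in> Qp p" "r > 0" by blast
    show ?case
    proof
      fix c assume c: "c \<in> s"
      hence "padic_dist p x c < r" using s unfolding pball_def by auto
      thus "\<exists>r>0. pball p c r \<subseteq> s" using pball_sub[of c x r] c s by (intro exI[of _ "r - padic_dist p x c"]) auto
    qed
  qed
  thus ?thesis using assms(2) by blast
qed

lemma abs_lt2: assumes x: "x \<in> Qp p" and a: "padic_abs p x < 2" shows "padic_abs p x \<le> 1"
proof (cases "x = padic_zero p")
  case True thus ?thesis using abs_zero[OF p] by simp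
next
  case False
  obtain k where k: "padic_abs p x = real p powi k" using abs_is_power[OF p x False] by blast
  have p2: "real p \<ge> 2" using prime_ge_2_nat[OF p] by simp
  have "k \<le> 0"
  proof (rule ccontr)
    assume "\<not> k \<le> 0"
    hence "real p powi 1 \<le> real p powi k" using p2 by (intro power_int_increasing) auto
    thus False using k a p2 by simp
  qed
  hence "real p powi k \<le> real p powi 0" using p2 by (intro power_int_increasing) auto
  thus ?thesis using k by simp
qed

lemma Zp_eq_ball: "Zp p = pball p (padic_zero p) 2"
proof (intro set_eqI iffI)
  fix x assume "x \<in> Zp p"
  thus "x \<in> pball p (padic_zero p) 2" unfolding pball_def Zp_def using dist_zero_left[OF p, of x] by simp
next
  fix x assume x: "x \<in> pball p (padic_zero p) 2"
  hence "x \<in> Qp p" "padic_abs p x < 2" unfolding pball_def using dist_zero_left[OF p, of x] by auto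
  thus "x \<in> Zp p" unfolding Zp_def using abs_lt2 by simp
qed

lemma Zp_open: "openin (padic_topology p) (Zp p)"
  unfolding Zp_eq_ball by (rule pball_open[OF zero_in_Qp[OF p]]) simp

lemma Qp_open: "openin (padic_topology p) (Qp p)"
proof -
  have "Qp p = \<Union>{pball p x r | x r. x \<in> Qp p \<and> r > 0}"
  proof
    show "Qp p \<subseteq> \<Union>{pball p x r | x r. x \<in> Qp p \<and> r > 0}"
    proof
      fix x assume x: "x \<in> Qp p"
      have "\<exists>x' r. pball p x 1 = pball p x' r \<and> x' \<in> Qp p \<and> r > 0"
        using x by (intro exI[of _ x] exI[of _ "1::real"]) simp
      hence "pball p x 1 \<in> {pball p x r | x r. x \<in> Qp p \<and> r > 0}" by simp
      moreover have "x \<in> pball p x 1" using pball_center[OF x] by simp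
      ultimately show "x \<in> \<Union>{pball p x r | x r. x \<in> Qp p \<and> r > 0}" by blast
    qed
  next
    show "\<Union>{pball p x r | x r. x \<in> Qp p \<and> r > 0} \<subseteq> Qp p"
    proof
      fix y assume "y \<in> \<Union>{pball p x r | x r. x \<in> Qp p \<and> r > 0}"
      then obtain x r where "y \<in> pball p x r" by blast
      thus "y \<in> Qp p" unfolding pball_def by simp
    qed
  qed
  hence "topspace (padic_topology p) = Qp p" unfolding padic_topology_basis topology_generated_by_topspace
    by (rule sym)
  thus ?thesis using openin_topspace[of "padic_topology p"] by simp
qed

lemma pball_Zp: assumes c: "fst c p \<in> Zp p" and r: "r \<le> 1" shows "pball p (fst c p) r \<subseteq> Zp p"
proof
  fix y assume y: "y \<in> pball p (fst c p) r"
  have yq: "y \<in> Qp p" "padic_dist p (fst c p) y < r" using y unfolding pball_def by auto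
  have cq: "fst c p \<in> Qp p" "padic_abs p (fst c p) \<le> 1" using c unfolding Zp_def by auto
  have "padic_abs p y \<le> max (padic_abs p (fst c p)) (padic_dist p (fst c p) y)"
    by (rule abs_le_max_dist[OF p cq(1) yq(1)])
  thus "y \<in> Zp p" using yq cq r unfolding Zp_def by auto
qed

end

lemma badset_finite: "c \<in> adeles \<Longrightarrow> finite (badset c)"
  unfolding adeles_def badset_def by simp

lemma box_in_basis: assumes c: "c \<in> adeles" and F: "finite F" and r: "r > 0" and e: "e > 0"
  shows "abox c F r e \<in> adele_basis"
proof -
  define U where "U = (\<lambda>p. if p \<in> F then pball p (fst c p) r else Zp p)"
  have "\<forall>p. prime p \<longrightarrow> openin (padic_topology p) (U p)"
  proof (intro allI impI)
    fix p :: nat assume p: "prime p"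
    have "fst c p \<in> Qp p" using c p unfolding adeles_def by auto
    thus "openin (padic_topology p) (U p)" unfolding U_def using pball_open[OF p _ r] Zp_open[OF p] by auto
  qed
  moreover have "finite {p. prime p \<and> U p \<noteq> Zp p}"
    by (rule finite_subset[OF _ F]) (auto simp: U_def)
  moreover have "open (ball (snd c) e)" by simp
  moreover have "abox c F r e = {a \<in> adeles. (\<forall>p. prime p \<longrightarrow> fst a p \<in> U p) \<and> snd a \<in> ball (snd c) e}"
    unfolding abox_def U_def by simp
  ultimately show ?thesis unfolding adele_basis_def by blast
qed

lemma box_open: "c \<in> adeles \<Longrightarrow> finite F \<Longrightarrow> r > 0 \<Longrightarrow> e > 0 \<Longrightarrow> openin adele_topology (abox c F r e)"
  unfolding adele_topology_def by (rule topology_generated_by_Basis, rule box_in_basis)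

lemma center_in_box: assumes c: "c \<in> adeles" and F: "badset c \<subseteq> F" and r: "r > 0" and e: "e > 0"
  shows "c \<in> abox c F r e"
proof -
  have "\<forall>p. prime p \<longrightarrow> fst c p \<in> (if p \<in> F then pball p (fst c p) r else Zp p)"
  proof (intro allI impI)
    fix p :: nat assume p: "prime p"
    have "fst c p \<in> Qp p" using c p unfolding adeles_def by auto
    thus "fst c p \<in> (if p \<in> F then pball p (fst c p) r else Zp p)"
      using pball_center[OF p _ r] F p unfolding badset_def by auto
  qed
  thus ?thesis unfolding abox_def using c e by simp
qed

lemma box_mem: "a \<in> abox c F r e \<longleftrightarrow> a \<in> adeles \<and>
   (\<forall>p. prime p \<longrightarrow> fst a p \<in> (if p \<in> F then pball p (fst c p) r else Zp p)) \<and> dist (snd c) (snd a) < e"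
  unfolding abox_def mem_ball by (rule mem_Collect_eq)

lemma box_mono: assumes F: "F \<subseteq> F'" and bad: "badset c \<subseteq> F" and r: "r' \<le> r" "r' \<le> 1" and e: "e' \<le> e"
  shows "abox c F' r' e' \<subseteq> abox c F r e"
proof
  fix a assume a: "a \<in> abox c F' r' e'"
  have a': "a \<in> adeles \<and>
   (\<forall>p. prime p \<longrightarrow> fst a p \<in> (if p \<in> F' then pball p (fst c p) r' else Zp p)) \<and> dist (snd c) (snd a) < e'"
    using a unfolding box_mem .
  have "\<forall>p. prime p \<longrightarrow> fst a p \<in> (if p \<in> F then pball p (fst c p) r else Zp p)"
  proof (intro allI impI)
    fix p :: nat assume p: "prime p"
    have ap: "fst a p \<in> (if p \<in> F' then pball p (fst c p) r' else Zp p)" using conjunct1[OF conjunct2[OF a']] p by simp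
    show "fst a p \<in> (if p \<in> F then pball p (fst c p) r else Zp p)"
    proof (cases "p \<in> F")
      case True
      hence "p \<in> F'" using F by blast
      hence "fst a p \<in> pball p (fst c p) r'" using ap by simp
      hence "fst a p \<in> pball p (fst c p) r" using pball_mono[OF r(1), of p "fst c p"] by blast
      thus ?thesis using True by simp
    next
      case False
      hence "fst c p \<in> Zp p" using bad p unfolding badset_def by blast
      hence sub: "pball p (fst c p) r' \<subseteq> Zp p" by (rule pball_Zp[OF p _ r(2)])
      have "fst a p \<in> Zp p"
      proof (cases "p \<in> F'")
        case True thus ?thesis using ap sub by auto
      next
        case False thus ?thesis using ap by simp
      qed
      thus ?thesis using False by simp
    qed
  qed
  moreover have "dist (snd c) (snd a) < e" using conjunct2[OF conjunct2[OF a']] e by linarith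
  ultimately show "a \<in> abox c F r e" unfolding box_mem using conjunct1[OF a'] by (intro conjI)
qed

lemma box_Int: assumes "badset c \<subseteq> F1" "badset c \<subseteq> F2" "r1 \<le> 1" "r2 \<le> 1"
  shows "abox c (F1 \<union> F2) (min r1 r2) (min e1 e2) \<subseteq> abox c F1 r1 e1 \<inter> abox c F2 r2 e2"
proof -
  have "abox c (F1 \<union> F2) (min r1 r2) (min e1 e2) \<subseteq> abox c F1 r1 e1"
    by (rule box_mono) (use assms in auto)
  moreover have "abox c (F1 \<union> F2) (min r1 r2) (min e1 e2) \<subseteq> abox c F2 r2 e2"
    by (rule box_mono) (use assms in auto)
  ultimately show ?thesis by blast
qed

definition good_box :: "adele \<Rightarrow> nat set \<Rightarrow> real \<Rightarrow> real \<Rightarrow> bool" where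
  "good_box c F r e \<longleftrightarrow> finite F \<and> badset c \<subseteq> F \<and> 0 < r \<and> r \<le> 1 \<and> 0 < e"

lemma open_contains_box:
  assumes W: "openin adele_topology W" and cW: "c \<in> W"
  shows "\<exists>F r e. good_box c F r e \<and> abox c F r e \<subseteq> W"
proof -
  have g: "generate_topology_on adele_basis W"
    using W unfolding adele_topology_def by (rule openin_topology_generated_by)
  have "\<forall>c\<in>W. \<exists>F r e. good_box c F r e \<and> abox c F r e \<subseteq> W"
    using g
  proof (induction rule: generate_topology_on.induct)
    case Empty thus ?case by simp
  next
    case (Int a b)
    show ?case
    proof
      fix c assume "c \<in> a \<inter> b"
      then obtain F1 r1 e1 F2 r2 e2 where b1: "good_box c F1 r1 e1" "abox c F1 r1 e1 \<subseteq> a"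
        and b2: "good_box c F2 r2 e2" "abox c F2 r2 e2 \<subseteq> b"
        using Int.IH by blast
      have "good_box c (F1 \<union> F2) (min r1 r2) (min e1 e2)" using b1 b2 unfolding good_box_def by auto
      moreover have "abox c (F1 \<union> F2) (min r1 r2) (min e1 e2) \<subseteq> a \<inter> b"
        using box_Int[of c F1 F2 r1 r2 e1 e2] b1 b2 unfolding good_box_def by auto
      ultimately show "\<exists>F r e. good_box c F r e \<and> abox c F r e \<subseteq> a \<inter> b" by blast
    qed
  next
    case (UN K)
    show ?case
    proof
      fix c assume "c \<in> \<Union>K"
      then obtain k where "k \<in> K" "c \<in> k" by blast
      thus "\<exists>F r e. good_box c F r e \<and> abox c F r e \<subseteq> \<Union>K" using UN.IH by blast
    qed
  next
    case (Basis s)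
    then obtain U V where s: "s = {a \<in> adeles. (\<forall>p. prime p \<longrightarrow> fst a p \<in> U p) \<and> snd a \<in> V}"
      and U: "\<forall>p. prime p \<longrightarrow> openin (padic_topology p) (U p)"
      and fin: "finite {p. prime p \<and> U p \<noteq> Zp p}" and V: "open V"
      unfolding adele_basis_def by blast
    show ?case
    proof
      fix c assume c: "c \<in> s"
      have cA: "c \<in> adeles" using c s by auto
      define F0 where "F0 = {p. prime p \<and> U p \<noteq> Zp p} \<union> badset c"
      have F0: "finite F0" unfolding F0_def using fin badset_finite[OF cA] by simp
      have "\<forall>p\<in>F0. \<exists>r>0. pball p (fst c p) r \<subseteq> U p"
      proof
        fix p assume "p \<in> F0"
        hence p: "prime p" unfolding F0_def badset_def by auto
        show "\<exists>r>0. pball p (fst c p) r \<subseteq> U p"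
          using open_contains_pball[OF p] U p c s by auto
      qed
      from bchoice[OF this] obtain R where R: "\<forall>p\<in>F0. R p > 0 \<and> pball p (fst c p) (R p) \<subseteq> U p" by blast
      define r where "r = Min (insert 1 (R ` F0))"
      have r0: "r > 0" unfolding r_def using F0 R by (subst Min_gr_iff) auto
      have r1: "r \<le> 1" unfolding r_def using F0 by (intro Min_le) auto
      have rR: "r \<le> R p" if "p \<in> F0" for p unfolding r_def using F0 that by (intro Min_le) auto
      obtain e where e: "e > 0" "ball (snd c) e \<subseteq> V" using V c s open_contains_ball by blast
      have "abox c F0 r e \<subseteq> s"
      proof
        fix a assume a: "a \<in> abox c F0 r e"
        have "fst a p \<in> U p" if p: "prime p" for p
        proof (cases "p \<in> F0")
          case True
          hence "fst a p \<in> pball p (fst c p) r" using a p unfolding abox_def by auto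
          thus ?thesis using pball_mono[OF rR[OF True]] R True by blast
        next
          case False
          hence "fst a p \<in> Zp p" "U p = Zp p" using a p unfolding abox_def F0_def by auto
          thus ?thesis by simp
        qed
        moreover have "snd a \<in> V" using a e unfolding abox_def by auto
        ultimately show "a \<in> s" using a s unfolding abox_def by auto
      qed
      moreover have "good_box c F0 r e" unfolding good_box_def using F0 r0 r1 e F0_def by auto
      ultimately show "\<exists>F r e. good_box c F r e \<and> abox c F r e \<subseteq> s" by blast
    qed
  qed
  thus ?thesis using cW by blast
qed

lemma topspace_adele: "topspace adele_topology = adeles"
proof -
  have "\<Union>adele_basis \<subseteq> adeles" unfolding adele_basis_def by auto
  moreover have "adeles \<subseteq> \<Union>adele_basis"
  proof
    fix c assume c: "c \<in> adeles"
    have "c \<in> abox c (badset c) 1 1" by (rule center_in_box[OF c]) auto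
    moreover have "abox c (badset c) 1 1 \<in> adele_basis" by (rule box_in_basis[OF c badset_finite[OF c]]) auto
    ultimately show "c \<in> \<Union>adele_basis" by blast
  qed
  ultimately show ?thesis unfolding adele_topology_def by simp
qed

lemma in_closure_iff:
  "c \<in> adele_topology closure_of S \<longleftrightarrow>
     c \<in> adeles \<and> (\<forall>F r e. good_box c F r e \<longrightarrow> abox c F r e \<inter> S \<noteq> {})"
proof
  assume c: "c \<in> adele_topology closure_of S"
  have c': "c \<in> topspace adele_topology" "\<forall>T. c \<in> T \<and> openin adele_topology T \<longrightarrow> (\<exists>y. y \<in> S \<and> y \<in> T)"
    using c unfolding in_closure_of by auto
  have cA: "c \<in> adeles" using c'(1) topspace_adele by simp
  have B: "abox c F r e \<inter> S \<noteq> {}" if "good_box c F r e" for F r e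
  proof -
    have "openin adele_topology (abox c F r e)" using that cA unfolding good_box_def by (intro box_open) auto
    moreover have "c \<in> abox c F r e" using that cA unfolding good_box_def by (intro center_in_box) auto
    ultimately have "\<exists>y. y \<in> S \<and> y \<in> abox c F r e" using c'(2) by blast
    thus ?thesis by blast
  qed
  show "c \<in> adeles \<and> (\<forall>F r e. good_box c F r e \<longrightarrow> abox c F r e \<inter> S \<noteq> {})"
    using cA B by (intro conjI allI impI)
next
  assume h: "c \<in> adeles \<and> (\<forall>F r e. good_box c F r e \<longrightarrow> abox c F r e \<inter> S \<noteq> {})"
  have "\<exists>y. y \<in> S \<and> y \<in> T" if T12: "c \<in> T" "openin adele_topology T" for T
  proof -
    obtain F r e where Fr: "good_box c F r e" "abox c F r e \<subseteq> T" using open_contains_box[OF T12(2,1)] by blast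
    hence "abox c F r e \<inter> S \<noteq> {}" using conjunct2[OF h] by blast
    thus ?thesis using Fr(2) by blast
  qed
  hence L: "\<And>T. c \<in> T \<and> openin adele_topology T \<Longrightarrow> \<exists>y. y \<in> S \<and> y \<in> T" by blast
  have "c \<in> topspace adele_topology" using conjunct1[OF h] topspace_adele by simp
  thus "c \<in> adele_topology closure_of S" unfolding in_closure_of using L by blast
qed


lemma adeles_Qp: "a \<in> adeles \<Longrightarrow> prime p \<Longrightarrow> fst a p \<in> Qp p"
  unfolding adeles_def by auto

lemma adeles_nonprime: "a \<in> adeles \<Longrightarrow> \<not> prime p \<Longrightarrow> fst a p = {}"
  unfolding adeles_def by auto

lemma adeles_eqI: assumes "a \<in> adeles" "b \<in> adeles" "\<And>p. prime p \<Longrightarrow> fst a p = fst b p" "snd a = snd b"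
  shows "a = b"
proof -
  have "fst a = fst b"
  proof
    fix p show "fst a p = fst b p"
      using assms adeles_nonprime[OF assms(1), of p] adeles_nonprime[OF assms(2), of p] by (cases "prime p") auto
  qed
  thus ?thesis using assms(4) by (simp add: prod_eq_iff)
qed

lemma finite_int_dvd: "(a::int) \<noteq> 0 \<Longrightarrow> finite {p::nat. int p dvd a}"
proof -
  assume a: "a \<noteq> 0"
  have "{p::nat. int p dvd a} \<subseteq> {..nat \<bar>a\<bar>}"
  proof
    fix p :: nat assume "p \<in> {p::nat. int p dvd a}"
    hence "int p dvd \<bar>a\<bar>" by simp
    hence "int p \<le> \<bar>a\<bar>" using a by (intro zdvd_imp_le) auto
    thus "p \<in> {..nat \<bar>a\<bar>}" by simp
  qed
  thus ?thesis by (rule finite_subset) simp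
qed

lemma finite_pabs_ne1: assumes q: "q \<noteq> 0" shows "finite {p. prime p \<and> rat_pabs p q \<noteq> 1}"
proof -
  obtain a b where ab: "a \<noteq> 0" "b > 0" "q = of_int a / of_int b" using rat_as_frac[of q] q by metis
  have "{p. prime p \<and> rat_pabs p q \<noteq> 1} \<subseteq> {p::nat. int p dvd a} \<union> {p::nat. int p dvd b}"
  proof
    fix p assume p: "p \<in> {p. prime p \<and> rat_pabs p q \<noteq> 1}"
    show "p \<in> {p::nat. int p dvd a} \<union> {p::nat. int p dvd b}"
    proof (rule ccontr)
      assume "p \<notin> {p::nat. int p dvd a} \<union> {p::nat. int p dvd b}"
      hence "\<not> int p dvd a" "\<not> int p dvd b" by auto
      hence "rat_pabs p q = 1" using p ab pabs_divide[of p] pabs_int_notdvd[of p] by simp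
      thus False using p by simp
    qed
  qed
  moreover have "finite ({p::nat. int p dvd a} \<union> {p::nat. int p dvd b})" using ab finite_int_dvd by simp
  ultimately show ?thesis by (rule finite_subset)
qed

lemma rat_act_fst: "prime p \<Longrightarrow> fst (rat_act q a) p = padic_smult p q (fst a p)"
  unfolding rat_act_def by simp

lemma rat_act_snd: "snd (rat_act q a) = of_rat q * snd a"
  unfolding rat_act_def by simp

lemma rat_act_adeles: assumes a: "a \<in> adeles" and q: "q \<noteq> 0" shows "rat_act q a \<in> adeles"
proof -
  have 1: "\<forall>p. prime p \<longrightarrow> fst (rat_act q a) p \<in> Qp p"
    using smult_in_Qp adeles_Qp[OF a] rat_act_fst by simp
  have 2: "\<forall>p. \<not> prime p \<longrightarrow> fst (rat_act q a) p = {}" unfolding rat_act_def by simp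
  have "{p. prime p \<and> fst (rat_act q a) p \<notin> Zp p} \<subseteq> badset a \<union> {p. prime p \<and> rat_pabs p q \<noteq> 1}"
  proof
    fix p assume p: "p \<in> {p. prime p \<and> fst (rat_act q a) p \<notin> Zp p}"
    hence pp: "prime p" by simp
    show "p \<in> badset a \<union> {p. prime p \<and> rat_pabs p q \<noteq> 1}"
    proof (rule ccontr)
      assume "p \<notin> badset a \<union> {p. prime p \<and> rat_pabs p q \<noteq> 1}"
      hence "fst a p \<in> Zp p" "rat_pabs p q = 1" using pp unfolding badset_def by auto
      hence "fst (rat_act q a) p \<in> Zp p" using abs_smult[OF pp adeles_Qp[OF a pp]] smult_in_Qp[OF pp adeles_Qp[OF a pp]]
        rat_act_fst[OF pp] unfolding Zp_def by simp
      thus False using p by simp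
    qed
  qed
  moreover have "finite (badset a \<union> {p. prime p \<and> rat_pabs p q \<noteq> 1})"
    using badset_finite[OF a] finite_pabs_ne1[OF q] by simp
  ultimately have 3: "finite {p. prime p \<and> fst (rat_act q a) p \<notin> Zp p}" by (rule finite_subset)
  show ?thesis unfolding adeles_def using 1 2 3 by simp
qed

lemma rat_act_one: "a \<in> adeles \<Longrightarrow> rat_act 1 a = a"
  by (rule adeles_eqI) (auto simp: rat_act_fst rat_act_snd smult_one adeles_Qp intro: rat_act_adeles)

lemma rat_act_mult: assumes a: "a \<in> adeles" and q: "q \<noteq> 0" and r: "r \<noteq> 0"
  shows "rat_act q (rat_act r a) = rat_act (q * r) a"
proof (rule adeles_eqI)
  show "rat_act q (rat_act r a) \<in> adeles" using rat_act_adeles a q r by simp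
  show "rat_act (q * r) a \<in> adeles" using rat_act_adeles a q r by simp
  fix p :: nat assume p: "prime p"
  show "fst (rat_act q (rat_act r a)) p = fst (rat_act (q * r) a) p"
    using rat_act_fst[OF p] smult_smult[OF p adeles_Qp[OF a p]] by simp
next
  show "snd (rat_act q (rat_act r a)) = snd (rat_act (q * r) a)"
    by (simp add: rat_act_snd of_rat_mult)
qed

lemma orbit_subset: assumes a: "a \<in> adeles" shows "orbit a \<subseteq> adeles"
proof
  fix x assume "x \<in> orbit a"
  then obtain q where "q \<noteq> 0" "x = rat_act q a" unfolding orbit_def by blast
  thus "x \<in> adeles" using rat_act_adeles[OF a] by simp
qed

lemma orbit_self: assumes a: "a \<in> adeles" shows "a \<in> orbit a"
proof -
  have "a = rat_act 1 a" using rat_act_one[OF a] by simp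
  thus ?thesis unfolding orbit_def by (intro CollectI exI[of _ 1]) simp
qed

lemma orbit_act: assumes a: "a \<in> adeles" and r: "r \<noteq> 0" shows "orbit (rat_act r a) = orbit a"
proof
  show "orbit (rat_act r a) \<subseteq> orbit a"
  proof
    fix x assume "x \<in> orbit (rat_act r a)"
    then obtain q where "q \<noteq> 0" "x = rat_act q (rat_act r a)" unfolding orbit_def by blast
    hence "x = rat_act (q * r) a" "q * r \<noteq> 0" using rat_act_mult[OF a _ r] r by auto
    thus "x \<in> orbit a" unfolding orbit_def by blast
  qed
next
  show "orbit a \<subseteq> orbit (rat_act r a)"
  proof
    fix x assume "x \<in> orbit a"
    then obtain q where q: "q \<noteq> 0" "x = rat_act q a" unfolding orbit_def by blast
    have "rat_act (q / r) (rat_act r a) = rat_act (q / r * r) a" using rat_act_mult[OF a _ r] q r by simp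
    hence "x = rat_act (q / r) (rat_act r a)" "q / r \<noteq> 0" using q r by auto
    thus "x \<in> orbit (rat_act r a)" unfolding orbit_def by blast
  qed
qed

lemma rat_act_invertible: assumes a: "a \<in> adeles" and inv: "adele_invertible a" and q: "q \<noteq> 0"
  shows "adele_invertible (rat_act q a)"
proof -
  have 1: "\<forall>p. prime p \<longrightarrow> fst (rat_act q a) p \<noteq> padic_zero p"
    using inv smult_eq_zero_iff[OF _ adeles_Qp[OF a] q] rat_act_fst unfolding adele_invertible_def by simp
  have 2: "snd (rat_act q a) \<noteq> 0" using inv q unfolding adele_invertible_def rat_act_snd by simp
  have "{p. prime p \<and> fst (rat_act q a) p \<notin> Zp_units p} \<subseteq>
        {p. prime p \<and> fst a p \<notin> Zp_units p} \<union> {p. prime p \<and> rat_pabs p q \<noteq> 1}"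
  proof
    fix p assume p: "p \<in> {p. prime p \<and> fst (rat_act q a) p \<notin> Zp_units p}"
    hence pp: "prime p" by simp
    show "p \<in> {p. prime p \<and> fst a p \<notin> Zp_units p} \<union> {p. prime p \<and> rat_pabs p q \<noteq> 1}"
    proof (rule ccontr)
      assume "p \<notin> {p. prime p \<and> fst a p \<notin> Zp_units p} \<union> {p. prime p \<and> rat_pabs p q \<noteq> 1}"
      hence "fst a p \<in> Zp_units p" "rat_pabs p q = 1" using pp by auto
      hence "fst (rat_act q a) p \<in> Zp_units p" using abs_smult[OF pp adeles_Qp[OF a pp]] smult_in_Qp[OF pp adeles_Qp[OF a pp]]
        rat_act_fst[OF pp] unfolding Zp_units_def by simp
      thus False using p by simp
    qed
  qed
  moreover have "finite ({p. prime p \<and> fst a p \<notin> Zp_units p} \<union> {p. prime p \<and> rat_pabs p q \<noteq> 1})"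
    using inv finite_pabs_ne1[OF q] unfolding adele_invertible_def by simp
  ultimately have 3: "finite {p. prime p \<and> fst (rat_act q a) p \<notin> Zp_units p}" by (rule finite_subset)
  show ?thesis unfolding adele_invertible_def using 1 2 3 by simp
qed


definition chiQ :: "adele \<Rightarrow> rat" where
  "chiQ a = (if snd a > 0 then 1 else -1) *
             (\<Prod>p\<in>{p. prime p \<and> adele_val p a \<noteq> 0}. (of_nat p :: rat) powi (- adele_val p a))"

definition zeroset :: "adele \<Rightarrow> nat option set" where
  "zeroset a = {Some p | p. prime p \<and> fst a p = padic_zero p} \<union> (if snd a = 0 then {None} else {})"

lemma chi_inv: "adele_invertible a \<Longrightarrow> chi a = Inr (rat_act (chiQ a) a)"
  unfolding chi_def chiQ_def by simp

lemma chi_noninv: "\<not> adele_invertible a \<Longrightarrow> chi a = Inl (zeroset a)"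
  unfolding chi_def zeroset_def by simp

lemma prod_pos_powi: "(\<Prod>p\<in>V. (of_nat p :: rat) powi (k p)) > 0" if "\<forall>p\<in>V. prime p"
  using that by (induction V rule: infinite_finite_induct) (auto simp: prime_gt_0_nat)

lemma val_finite: assumes a: "a \<in> adeles" and inv: "adele_invertible a"
  shows "finite {p. prime p \<and> adele_val p a \<noteq> 0}"
proof -
  have "{p. prime p \<and> adele_val p a \<noteq> 0} \<subseteq> {p. prime p \<and> fst a p \<notin> Zp_units p}"
  proof
    fix p assume p: "p \<in> {p. prime p \<and> adele_val p a \<noteq> 0}"
    hence pp: "prime p" by simp
    show "p \<in> {p. prime p \<and> fst a p \<notin> Zp_units p}"
    proof (rule ccontr)
      assume "p \<notin> {p. prime p \<and> fst a p \<notin> Zp_units p}"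
      hence u: "padic_abs p (fst a p) = 1" using pp unfolding Zp_units_def by auto
      have nz: "fst a p \<noteq> padic_zero p" using inv pp unfolding adele_invertible_def by auto
      have "real p powi (- adele_val p a) = real p powi 0"
        using padic_val_eq[OF pp adeles_Qp[OF a pp] nz] u unfolding adele_val_def by simp
      hence "- adele_val p a = 0" by (rule powi_inj[OF pp])
      thus False using p by simp
    qed
  qed
  moreover have "finite {p. prime p \<and> fst a p \<notin> Zp_units p}" using inv unfolding adele_invertible_def by simp
  ultimately show ?thesis by (rule finite_subset)
qed

lemma pabs_prod: "prime l \<Longrightarrow> rat_pabs l (\<Prod>p\<in>V. f p) = (\<Prod>p\<in>V. rat_pabs l (f p))"
  by (induction V rule: infinite_finite_induct) (auto simp: pabs_mult)

lemma pabs_prime_powi: assumes l: "prime l" and p: "prime p"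
  shows "rat_pabs l ((of_nat p :: rat) powi k) = (if p = l then real l powi (- k) else 1)"
proof (cases "p = l")
  case True
  have "rat_pabs l ((of_nat p :: rat) powi k) = (1 / real l) powi k"
    using pabs_powi[OF l] pabs_nat_prime_self[OF l] True by simp
  also have "\<dots> = (inverse (real l)) powi k" by (simp add: inverse_eq_divide)
  also have "\<dots> = inverse (real l powi k)" by (rule power_int_inverse)
  also have "\<dots> = real l powi (- k)" by (rule power_int_minus[symmetric])
  finally show ?thesis using True by simp
next
  case False
  thus ?thesis using pabs_powi[OF l] pabs_nat_prime_other[OF l p] by simp
qed

lemma pabs_chiQ: assumes a: "a \<in> adeles" and inv: "adele_invertible a" and l: "prime l"
  shows "rat_pabs l (chiQ a) = real l powi (adele_val l a)"
proof -
  define V where "V = {p. prime p \<and> adele_val p a \<noteq> 0}"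
  have fV: "finite V" using val_finite[OF a inv] V_def by simp
  have s: "rat_pabs l (if snd a > 0 then 1 else -1) = 1" using pabs_minus[OF l, of 1] l by auto
  have "rat_pabs l (\<Prod>p\<in>V. (of_nat p :: rat) powi (- adele_val p a)) =
        (\<Prod>p\<in>V. rat_pabs l ((of_nat p :: rat) powi (- adele_val p a)))" by (rule pabs_prod[OF l])
  also have "\<dots> = (\<Prod>p\<in>V. (if p = l then real l powi (adele_val l a) else 1))"
    by (rule prod.cong) (auto simp: V_def pabs_prime_powi[OF l])
  also have "\<dots> = (if l \<in> V then real l powi (adele_val l a) else 1)" using fV by simp
  also have "\<dots> = real l powi (adele_val l a)" unfolding V_def using l by auto
  finally show ?thesis unfolding chiQ_def V_def[symmetric] using s pabs_mult[OF l] by simp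
qed

lemma chiQ_nz: "chiQ a \<noteq> 0"
proof -
  have "(\<Prod>p\<in>{p. prime p \<and> adele_val p a \<noteq> 0}. (of_nat p :: rat) powi (- adele_val p a)) > 0"
    by (rule prod_pos_powi) simp
  thus ?thesis unfolding chiQ_def by auto
qed

lemma chi_unit: assumes a: "a \<in> adeles" and inv: "adele_invertible a"
  shows "rat_act (chiQ a) a \<in> units_U"
proof -
  have A: "rat_act (chiQ a) a \<in> adeles" by (rule rat_act_adeles[OF a chiQ_nz])
  have U: "fst (rat_act (chiQ a) a) p \<in> Zp_units p" if p: "prime p" for p
  proof -
    have nz: "fst a p \<noteq> padic_zero p" using inv p unfolding adele_invertible_def by auto
    have q: "fst a p \<in> Qp p" by (rule adeles_Qp[OF a p])
    have "padic_abs p (padic_smult p (chiQ a) (fst a p)) = real p powi (adele_val p a) * real p powi (- adele_val p a)"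
      using abs_smult[OF p q] pabs_chiQ[OF a inv p] padic_val_eq[OF p q nz] unfolding adele_val_def by simp
    also have "\<dots> = 1" using prime_gt_0_nat[OF p] by (simp add: power_int_minus)
    finally show ?thesis unfolding Zp_units_def using smult_in_Qp[OF p q] rat_act_fst[OF p] by simp
  qed
  have P: "(\<Prod>p\<in>{p. prime p \<and> adele_val p a \<noteq> 0}. (of_nat p :: rat) powi (- adele_val p a)) > 0"
    by (rule prod_pos_powi) simp
  have "snd a \<noteq> 0" using inv unfolding adele_invertible_def by simp
  hence "of_rat (chiQ a) * snd a > 0"
    using P unfolding chiQ_def
    by (cases "snd a > 0") (auto simp: of_rat_mult mult_pos_pos mult_neg_neg zero_less_mult_iff)
  thus ?thesis unfolding units_U_def using A U rat_act_snd by simp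
qed

lemma rat_pos_units_one: assumes t: "t > 0" and all: "\<forall>p. prime p \<longrightarrow> rat_pabs p t = 1"
  shows "t = (1::rat)"
proof -
  obtain n d where nd: "quotient_of t = (n, d)" by (cases "quotient_of t") auto
  have d: "d > 0" using quotient_of_denom_pos[OF nd] .
  have tnd: "t = of_int n / of_int d" using quotient_of_div[OF nd] .
  have cop: "coprime n d" using quotient_of_coprime[OF nd] .
  have n: "n > 0" using t tnd d by (simp add: zero_less_divide_iff)
  have pt: "rat_pabs p t = rat_pabs p (of_int n) / rat_pabs p (of_int d)" if "prime p" for p
    using tnd pabs_divide[OF that] by simp
  have n1: "n = 1"
  proof (rule ccontr)
    assume "n \<noteq> 1"
    hence "nat n \<noteq> 1" using n by simp
    then obtain p where p: "prime p" "p dvd nat n" using prime_factor_nat by blast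
    have "int p dvd int (nat n)" using p(2) by (simp only: of_nat_dvd_iff)
    hence pn: "int p dvd n" using n by simp
    have "\<not> int p dvd d"
    proof
      assume "int p dvd d"
      hence "is_unit (int p)" using coprime_common_divisor[OF cop pn] by simp
      moreover have "prime (int p)" using p(1) by simp
      ultimately show False using not_prime_unit by blast
    qed
    hence "rat_pabs p (of_int d) = 1" by (rule pabs_int_notdvd[OF p(1)])
    moreover have "rat_pabs p (of_int n) \<le> real p powi (- int 1)" using pabs_int_dvd[OF p(1), of 1 n] pn by simp
    moreover have "real p powi (- int 1) < 1" using prime_gt_1_nat[OF p(1)] by (simp add: power_int_minus inverse_less_1_iff)
    ultimately have "rat_pabs p t < 1" using pt[OF p(1)] by simp
    thus False using all p by simp
  qed
  have d1: "d = 1"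
  proof (rule ccontr)
    assume "d \<noteq> 1"
    hence "nat d \<noteq> 1" using d by simp
    then obtain p where p: "prime p" "p dvd nat d" using prime_factor_nat by blast
    have "int p dvd int (nat d)" using p(2) by (simp only: of_nat_dvd_iff)
    hence pd: "int p dvd d" using d by simp
    have "rat_pabs p (of_int d) \<le> real p powi (- int 1)" using pabs_int_dvd[OF p(1), of 1 d] pd by simp
    moreover have "real p powi (- int 1) < 1" using prime_gt_1_nat[OF p(1)] by (simp add: power_int_minus inverse_less_1_iff)
    moreover have "rat_pabs p (of_int d) > 0" using pabs_pos[OF p(1)] d by simp
    ultimately have "rat_pabs p t > 1" using pt[OF p(1)] n1 pabs_one[OF p(1)] by (simp add: less_divide_eq)
    thus False using all p by simp
  qed
  show ?thesis using tnd n1 d1 by simp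
qed

lemma units_unique: assumes u: "u \<in> units_U" and t: "t \<noteq> 0" and v: "rat_act t u \<in> units_U"
  shows "t = 1"
proof (rule rat_pos_units_one)
  have uA: "u \<in> adeles" using u unfolding units_U_def by simp
  show "\<forall>p. prime p \<longrightarrow> rat_pabs p t = 1"
  proof (intro allI impI)
    fix p :: nat assume p: "prime p"
    have "padic_abs p (fst u p) = 1" using u p unfolding units_U_def Zp_units_def by auto
    moreover have "padic_abs p (fst (rat_act t u) p) = 1" using v p unfolding units_U_def Zp_units_def by auto
    ultimately show "rat_pabs p t = 1" using abs_smult[OF p adeles_Qp[OF uA p]] rat_act_fst[OF p] by simp
  qed
  have "snd u > 0" "of_rat t * snd u > 0" using u v rat_act_snd unfolding units_U_def by auto
  thus "t > 0" by (simp add: zero_less_mult_iff)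
qed

lemma units_invertible: assumes u: "u \<in> units_U" shows "adele_invertible u"
proof -
  have U: "\<forall>p. prime p \<longrightarrow> fst u p \<in> Zp_units p" "snd u > 0" using u unfolding units_U_def by auto
  have "fst u p \<noteq> padic_zero p" if p: "prime p" for p
  proof
    assume "fst u p = padic_zero p"
    hence "padic_abs p (fst u p) = 0" using abs_zero[OF p] by simp
    moreover have "padic_abs p (fst u p) = 1" using U(1) p unfolding Zp_units_def by blast
    ultimately show False by simp
  qed
  moreover have "{p. prime p \<and> fst u p \<notin> Zp_units p} = {}" using U(1) by blast
  hence "finite {p. prime p \<and> fst u p \<notin> Zp_units p}" by (simp only: finite.emptyI)
  ultimately show ?thesis using U(2) unfolding adele_invertible_def by simp
qed

lemma chi_units: assumes u: "u \<in> units_U" shows "chi u = Inr u"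
proof -
  have uA: "u \<in> adeles" using u unfolding units_U_def by simp
  have inv: "adele_invertible u" by (rule units_invertible[OF u])
  have "rat_act (chiQ u) u \<in> units_U" by (rule chi_unit[OF uA inv])
  hence "chiQ u = 1" by (rule units_unique[OF u chiQ_nz])
  thus ?thesis using chi_inv[OF inv] rat_act_one[OF uA] by simp
qed

lemma chi_inv_eq_iff: assumes a: "a \<in> adeles" "adele_invertible a" and b: "b \<in> adeles" "adele_invertible b"
  shows "chi a = chi b \<longleftrightarrow> b \<in> orbit a"
proof
  assume "chi a = chi b"
  hence e: "rat_act (chiQ a) a = rat_act (chiQ b) b" using chi_inv a b by simp
  have "b = rat_act (1 / chiQ b) (rat_act (chiQ b) b)"
    using rat_act_mult[OF b(1), of "1 / chiQ b" "chiQ b"] chiQ_nz rat_act_one[OF b(1)] by simp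
  also have "\<dots> = rat_act (1 / chiQ b) (rat_act (chiQ a) a)" using e by simp
  also have "\<dots> = rat_act (1 / chiQ b * chiQ a) a" by (rule rat_act_mult[OF a(1)]) (use chiQ_nz in auto)
  finally show "b \<in> orbit a" unfolding orbit_def using chiQ_nz by (intro CollectI exI[of _ "1 / chiQ b * chiQ a"]) simp
next
  assume "b \<in> orbit a"
  then obtain r where r: "r \<noteq> 0" "b = rat_act r a" unfolding orbit_def by blast
  define u where "u = rat_act (chiQ a) a"
  have u: "u \<in> units_U" using chi_unit[OF a] u_def by simp
  have "rat_act (chiQ b) b = rat_act (chiQ b * r / chiQ a) u"
    using r rat_act_mult[OF a(1)] rat_act_mult[OF rat_act_adeles[OF a(1) chiQ_nz]] chiQ_nz unfolding u_def
    by simp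
  moreover have "rat_act (chiQ b) b \<in> units_U" by (rule chi_unit[OF b])
  ultimately have v: "rat_act (chiQ b * r / chiQ a) u \<in> units_U" by simp
  have "chiQ b * r / chiQ a \<noteq> 0" using chiQ_nz r by simp
  hence "chiQ b * r / chiQ a = 1" using units_unique[OF u _ v] by blast
  moreover have uA: "u \<in> adeles" using u unfolding units_U_def by simp
  ultimately have "rat_act (chiQ b) b = u" using \<open>rat_act (chiQ b) b = _\<close> rat_act_one[OF uA] by metis
  thus "chi a = chi b" using chi_inv a b u_def by simp
qed


lemma dist_smult: assumes p: "prime p" and x: "x \<in> Qp p"
  shows "padic_dist p (padic_smult p q x) (padic_smult p q' x) = rat_pabs p (q - q') * padic_abs p x"
proof -
  obtain s where s: "padic_cauchy p s" "x = padic_class p s" using Qp_obtain[OF p x] by blast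
  have "(\<lambda>n. rat_pabs p (q * s n - q' * s n)) \<longlonglongrightarrow>
        padic_dist p (padic_class p (\<lambda>n. q * s n)) (padic_class p (\<lambda>n. q' * s n))"
    by (rule dist_class_tendsto[OF p cauchy_smult[OF p s(1)] cauchy_smult[OF p s(1)]])
  moreover have "(\<lambda>n. rat_pabs p (q * s n - q' * s n)) = (\<lambda>n. rat_pabs p (q - q') * rat_pabs p (s n))"
    using pabs_mult[OF p] by (simp add: left_diff_distrib[symmetric])
  moreover have "(\<lambda>n. rat_pabs p (q - q') * rat_pabs p (s n)) \<longlonglongrightarrow> rat_pabs p (q - q') * padic_abs p x"
    unfolding s(2) by (intro tendsto_mult tendsto_const abs_class_tendsto[OF p s(1)])
  ultimately have "padic_dist p (padic_class p (\<lambda>n. q * s n)) (padic_class p (\<lambda>n. q' * s n)) =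
     rat_pabs p (q - q') * padic_abs p x" using LIMSEQ_unique by metis
  thus ?thesis using smult_class[OF p s(1)] s(2) by simp
qed

lemma int_of_pabs: assumes all: "\<forall>p. prime p \<longrightarrow> rat_pabs p x \<le> 1"
  shows "x \<in> \<int>"
proof -
  obtain n d where nd: "quotient_of x = (n, d)" by (cases "quotient_of x") auto
  have d: "d > 0" using quotient_of_denom_pos[OF nd] .
  have tnd: "x = of_int n / of_int d" using quotient_of_div[OF nd] .
  have cop: "coprime n d" using quotient_of_coprime[OF nd] .
  have d1: "d = 1"
  proof (rule ccontr)
    assume "d \<noteq> 1"
    hence "nat d \<noteq> 1" using d by simp
    then obtain p where p: "prime p" "p dvd nat d" using prime_factor_nat by blast
    have "int p dvd int (nat d)" using p(2) by (simp only: of_nat_dvd_iff)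
    hence pd: "int p dvd d" using d by simp
    have "\<not> int p dvd n"
    proof
      assume "int p dvd n"
      hence "is_unit (int p)" using coprime_common_divisor[OF cop _ pd] by simp
      moreover have "prime (int p)" using p(1) by simp
      ultimately show False using not_prime_unit by blast
    qed
    hence n1: "rat_pabs p (of_int n) = 1" by (rule pabs_int_notdvd[OF p(1)])
    have "rat_pabs p (of_int d) \<le> real p powi (- int 1)" using pabs_int_dvd[OF p(1), of 1 d] pd by simp
    moreover have "real p powi (- int 1) < 1" using prime_gt_1_nat[OF p(1)] by (simp add: power_int_minus inverse_less_1_iff)
    moreover have "rat_pabs p (of_int d) > 0" using pabs_pos[OF p(1)] d by simp
    moreover have "rat_pabs p x = rat_pabs p (of_int n) / rat_pabs p (of_int d)" using tnd pabs_divide[OF p(1)] by simp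
    ultimately have "rat_pabs p x > 1" using n1 by (simp add: less_divide_eq)
    moreover have "rat_pabs p x \<le> 1" using all p(1) by blast
    ultimately show False by linarith
  qed
  show ?thesis using tnd d1 by simp
qed

lemma closure_zeroset: assumes a: "a \<in> adeles" and c: "c \<in> adele_topology closure_of orbit a"
  shows "c \<in> adeles \<and> zeroset a \<subseteq> zeroset c"
proof -
  have cA: "c \<in> adeles" and cl: "\<And>F r e. good_box c F r e \<Longrightarrow> abox c F r e \<inter> orbit a \<noteq> {}"
    using c unfolding in_closure_iff by auto
  have "zeroset a \<subseteq> zeroset c"
  proof
    fix z assume z: "z \<in> zeroset a"
    show "z \<in> zeroset c"
    proof (cases z)
      case None
      hence sa: "snd a = 0" using z unfolding zeroset_def by (auto split: if_splits)
      show ?thesis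
      proof (rule ccontr)
        assume "z \<notin> zeroset c"
        hence sc: "snd c \<noteq> 0" using None unfolding zeroset_def by (auto split: if_splits)
        have g: "good_box c (badset c) 1 \<bar>snd c\<bar>" unfolding good_box_def using badset_finite[OF cA] sc by simp
        then obtain x where x: "x \<in> abox c (badset c) 1 \<bar>snd c\<bar>" "x \<in> orbit a" using cl by blast
        then obtain q where q: "x = rat_act q a" unfolding orbit_def by blast
        have "snd x = 0" using q sa rat_act_snd by simp
        moreover have "dist (snd c) (snd x) < \<bar>snd c\<bar>" using x(1) unfolding box_mem by blast
        ultimately show False by (simp add: dist_real_def)
      qed
    next
      case (Some p)
      hence p: "prime p" "fst a p = padic_zero p" using z unfolding zeroset_def by (auto split: if_splits)
      show ?thesis
      proof (rule ccontr)
        assume "z \<notin> zeroset c"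
        hence cp: "fst c p \<noteq> padic_zero p" using Some p unfolding zeroset_def by (auto split: if_splits)
        have cq: "fst c p \<in> Qp p" by (rule adeles_Qp[OF cA p(1)])
        define r where "r = min 1 (padic_abs p (fst c p))"
        have "padic_abs p (fst c p) \<noteq> 0" using abs_eq0_iff[OF p(1) cq] cp by simp
        hence r0: "r > 0" unfolding r_def using abs_nonneg[OF p(1) cq] by simp
        have g: "good_box c (insert p (badset c)) r 1" unfolding good_box_def using badset_finite[OF cA] r0
          by (simp add: r_def subset_insertI)
        then obtain x where x: "x \<in> abox c (insert p (badset c)) r 1" "x \<in> orbit a" using cl by blast
        then obtain q where q: "x = rat_act q a" unfolding orbit_def by blast
        have "fst x p = padic_zero p" using q p rat_act_fst smult_zero by simp
        moreover have "fst x p \<in> pball p (fst c p) r" using x(1) p(1) unfolding box_mem by auto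
        ultimately have "padic_dist p (fst c p) (padic_zero p) < r" unfolding pball_def by simp
        moreover have "padic_dist p (fst c p) (padic_zero p) = padic_abs p (fst c p)"
          using dist_sym[OF p(1) cq zero_in_Qp[OF p(1)]] dist_zero_left[OF p(1) cq] by simp
        ultimately show False unfolding r_def by simp
      qed
    qed
  qed
  thus ?thesis using cA by simp
qed

lemma T1_box: assumes c: "c \<in> adeles" and x: "x \<in> adeles" and ne: "c \<noteq> x"
  shows "\<exists>F r e. good_box c F r e \<and> x \<notin> abox c F r e"
proof (cases "snd c = snd x")
  case False
  have "good_box c (badset c) 1 \<bar>snd c - snd x\<bar>" unfolding good_box_def using badset_finite[OF c] False by simp
  moreover have "x \<notin> abox c (badset c) 1 \<bar>snd c - snd x\<bar>" unfolding box_mem by (simp add: dist_real_def)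
  ultimately show ?thesis by blast
next
  case True
  have "\<exists>p. prime p \<and> fst c p \<noteq> fst x p"
  proof (rule ccontr)
    assume "\<not> (\<exists>p. prime p \<and> fst c p \<noteq> fst x p)"
    hence "c = x" using adeles_eqI[OF c x] True by blast
    thus False using ne by simp
  qed
  then obtain p where p: "prime p" "fst c p \<noteq> fst x p" by blast
  have q: "fst c p \<in> Qp p" "fst x p \<in> Qp p" using adeles_Qp c x p(1) by auto
  define d where "d = padic_dist p (fst c p) (fst x p)"
  have d0: "d > 0" using dist_nonneg[OF p(1) q] dist_eq0_iff[OF p(1) q] p(2) unfolding d_def by linarith
  have "good_box c (insert p (badset c)) (min 1 d) 1" unfolding good_box_def using badset_finite[OF c] d0 by (simp add: subset_insertI)
  moreover have "x \<notin> abox c (insert p (badset c)) (min 1 d) 1"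
  proof
    assume "x \<in> abox c (insert p (badset c)) (min 1 d) 1"
    hence "fst x p \<in> pball p (fst c p) (min 1 d)" using p(1) unfolding box_mem by auto
    thus False unfolding pball_def d_def by simp
  qed
  ultimately show ?thesis by blast
qed

lemma inv_discrete:
  assumes a: "a \<in> adeles" and inv: "adele_invertible a" and c: "c \<in> adeles"
  shows "\<exists>F r e. good_box c F r e \<and>
     (\<forall>q q'. q \<noteq> 0 \<longrightarrow> q' \<noteq> 0 \<longrightarrow> rat_act q a \<in> abox c F r e \<longrightarrow> rat_act q' a \<in> abox c F r e \<longrightarrow> q = q')"
proof -
  define N where "N = {p. prime p \<and> fst a p \<notin> Zp_units p}"
  have fN: "finite N" using inv unfolding adele_invertible_def N_def by simp
  define F where "F = badset c \<union> N"
  have fF: "finite F" unfolding F_def using fN badset_finite[OF c] by simp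
  define r where "r = Min (insert 1 ((\<lambda>p. padic_abs p (fst a p)) ` N))"
  have pos: "padic_abs p (fst a p) > 0" if "p \<in> N" for p
  proof -
    have p: "prime p" using that unfolding N_def by simp
    have "fst a p \<noteq> padic_zero p" using inv p unfolding adele_invertible_def by simp
    thus ?thesis using abs_eq0_iff[OF p adeles_Qp[OF a p]] abs_nonneg[OF p adeles_Qp[OF a p]] by simp
  qed
  have r0: "r > 0" unfolding r_def using fN pos by (subst Min_gr_iff) auto
  have r1: "r \<le> 1" unfolding r_def using fN by (intro Min_le) auto
  have rN: "r \<le> padic_abs p (fst a p)" if "p \<in> N" for p unfolding r_def using fN that by (intro Min_le) auto
  define e where "e = \<bar>snd a\<bar> / 2"
  have e0: "e > 0" using inv unfolding adele_invertible_def e_def by simp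
  have g: "good_box c F r e" unfolding good_box_def F_def using fF r0 r1 e0 badset_finite[OF c] by (simp add: F_def)
  have uniq: "q = q'" if q: "q \<noteq> 0" "q' \<noteq> 0" "rat_act q a \<in> abox c F r e" "rat_act q' a \<in> abox c F r e" for q q'
  proof -
    define t where "t = q - q'"
    have bq: "\<forall>p. prime p \<longrightarrow> fst (rat_act q a) p \<in> (if p \<in> F then pball p (fst c p) r else Zp p)"
      "dist (snd c) (snd (rat_act q a)) < e" using q(3) unfolding box_mem by blast+
    have bq': "\<forall>p. prime p \<longrightarrow> fst (rat_act q' a) p \<in> (if p \<in> F then pball p (fst c p) r else Zp p)"
      "dist (snd c) (snd (rat_act q' a)) < e" using q(4) unfolding box_mem by blast+
    have allp: "rat_pabs p t \<le> 1" if p: "prime p" for p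
    proof -
      have aq: "fst a p \<in> Qp p" by (rule adeles_Qp[OF a p])
      define x where "x = padic_smult p q (fst a p)"
      define x' where "x' = padic_smult p q' (fst a p)"
      have xq: "x \<in> Qp p" "x' \<in> Qp p" unfolding x_def x'_def using smult_in_Qp[OF p aq] by auto
      have dx: "padic_dist p x x' = rat_pabs p t * padic_abs p (fst a p)"
        unfolding x_def x'_def t_def by (rule dist_smult[OF p aq])
      have fx: "fst (rat_act q a) p = x" "fst (rat_act q' a) p = x'" unfolding x_def x'_def using rat_act_fst[OF p] by auto
      show ?thesis
      proof (cases "p \<in> F")
        case True
        hence "x \<in> pball p (fst c p) r" "x' \<in> pball p (fst c p) r" using bq(1) bq'(1) p fx by auto
        hence d1: "padic_dist p (fst c p) x < r" "padic_dist p (fst c p) x' < r" unfolding pball_def by auto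
        have cq: "fst c p \<in> Qp p" by (rule adeles_Qp[OF c p])
        have "padic_dist p x x' \<le> max (padic_dist p x (fst c p)) (padic_dist p (fst c p) x')"
          by (rule dist_ultra[OF p xq(1) cq xq(2)])
        moreover have "padic_dist p x (fst c p) = padic_dist p (fst c p) x" by (rule dist_sym[OF p xq(1) cq])
        ultimately have lt: "rat_pabs p t * padic_abs p (fst a p) < r" using d1 dx by simp
        show ?thesis
        proof (cases "p \<in> N")
          case True
          have "r \<le> padic_abs p (fst a p)" by (rule rN[OF True])
          hence "rat_pabs p t * padic_abs p (fst a p) < 1 * padic_abs p (fst a p)" using lt by simp
          thus ?thesis using pos[OF True] by (simp only: mult_less_cancel_right) simp
        next
          case False
          hence "padic_abs p (fst a p) = 1" using p unfolding N_def Zp_units_def using aq by simp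
          thus ?thesis using lt r1 by simp
        qed
      next
        case False
        hence "x \<in> Zp p" "x' \<in> Zp p" using bq(1) bq'(1) p fx by auto
        hence ab: "padic_abs p x \<le> 1" "padic_abs p x' \<le> 1" unfolding Zp_def by auto
        have "padic_dist p x x' \<le> max (padic_dist p x (padic_zero p)) (padic_dist p (padic_zero p) x')"
          by (rule dist_ultra[OF p xq(1) zero_in_Qp[OF p] xq(2)])
        moreover have "padic_dist p x (padic_zero p) = padic_abs p x"
          using dist_sym[OF p xq(1) zero_in_Qp[OF p]] dist_zero_left[OF p xq(1)] by simp
        moreover have "padic_dist p (padic_zero p) x' = padic_abs p x'" by (rule dist_zero_left[OF p xq(2)])
        ultimately have "padic_dist p x x' \<le> 1" using ab by simp
        moreover have "padic_abs p (fst a p) = 1" using False p unfolding F_def N_def Zp_units_def using aq by simp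
        ultimately show ?thesis using dx by simp
      qed
    qed
    have ti: "t \<in> \<int>" using allp int_of_pabs by blast
    have "\<bar>of_rat q * snd a - of_rat q' * snd a\<bar> < 2 * e"
      using bq(2) bq'(2) rat_act_snd[of q a] rat_act_snd[of q' a] unfolding dist_real_def by linarith
    hence "\<bar>of_rat t\<bar> * \<bar>snd a\<bar> < \<bar>snd a\<bar>" unfolding e_def t_def
      by (simp add: left_diff_distrib[symmetric] abs_mult of_rat_diff)
    hence "\<bar>of_rat t :: real\<bar> < 1" using e0 unfolding e_def by (simp add: mult_less_cancel_right2)
    moreover obtain k where tk: "t = of_int k" using ti Ints_cases by blast
    ultimately have "real_of_int \<bar>k\<bar> < 1" by (simp only: of_rat_of_int_eq of_int_abs[symmetric])
    hence "\<bar>k\<bar> < 1" by (simp only: of_int_less_1_iff)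
    hence "k = 0" by linarith
    hence "t = 0" using tk by simp
    thus "q = q'" unfolding t_def by simp
  qed
  show ?thesis using g uniq by blast
qed

lemma closure_invertible: assumes a: "a \<in> adeles" and inv: "adele_invertible a"
  shows "adele_topology closure_of orbit a = orbit a"
proof
  show "orbit a \<subseteq> adele_topology closure_of orbit a"
    by (rule closure_of_subset) (simp add: topspace_adele orbit_subset[OF a])
next
  show "adele_topology closure_of orbit a \<subseteq> orbit a"
  proof
    fix c assume c: "c \<in> adele_topology closure_of orbit a"
    have cA: "c \<in> adeles" and cl: "\<And>F r e. good_box c F r e \<Longrightarrow> abox c F r e \<inter> orbit a \<noteq> {}"
      using c unfolding in_closure_iff by auto
    obtain F r e where g: "good_box c F r e" and
      u: "\<forall>q q'. q \<noteq> 0 \<longrightarrow> q' \<noteq> 0 \<longrightarrow> rat_act q a \<in> abox c F r e \<longrightarrow> rat_act q' a \<in> abox c F r e \<longrightarrow> q = q'"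
      using inv_discrete[OF a inv cA] by blast
    obtain x where x: "x \<in> abox c F r e" "x \<in> orbit a" using cl[OF g] by blast
    then obtain q where q: "q \<noteq> 0" "x = rat_act q a" unfolding orbit_def by blast
    show "c \<in> orbit a"
    proof (rule ccontr)
      assume "c \<notin> orbit a"
      hence "c \<noteq> x" using x by blast
      moreover have xA: "x \<in> adeles" using x orbit_subset[OF a] by blast
      ultimately obtain F2 r2 e2 where g2: "good_box c F2 r2 e2" "x \<notin> abox c F2 r2 e2" using T1_box[OF cA] by blast
      have g3: "good_box c (F \<union> F2) (min r r2) (min e e2)" using g g2(1) unfolding good_box_def by auto
      have sub: "abox c (F \<union> F2) (min r r2) (min e e2) \<subseteq> abox c F r e \<inter> abox c F2 r2 e2"
        by (rule box_Int) (use g g2(1) in \<open>auto simp: good_box_def\<close>)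
      obtain y where y: "y \<in> abox c (F \<union> F2) (min r r2) (min e e2)" "y \<in> orbit a" using cl[OF g3] by blast
      then obtain q' where q': "q' \<noteq> 0" "y = rat_act q' a" unfolding orbit_def by blast
      have "y \<in> abox c F r e" "y \<in> abox c F2 r2 e2" using y(1) sub by auto
      hence "q' = q" using u q q' x(1) by blast
      hence "y = x" using q q' by simp
      thus False using g2(2) \<open>y \<in> abox c F2 r2 e2\<close> by simp
    qed
  qed
qed


lemma le1_mult: "(x::real) \<le> 1 \<Longrightarrow> 0 \<le> y \<Longrightarrow> x * y \<le> y"
  using mult_right_mono[of x 1 y] by simp

lemma le1_mult': "(x::real) \<le> 1 \<Longrightarrow> 0 \<le> y \<Longrightarrow> y * x \<le> y"
  using mult_left_mono[of x 1 y] by simp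

lemma single_prime_approx: assumes p: "prime p" and eps: "\<epsilon> > 0"
  shows "\<exists>y. rat_pabs p (z - y) < \<epsilon> \<and> (\<forall>l. prime l \<longrightarrow> l \<noteq> p \<longrightarrow> rat_pabs l y \<le> 1)"
proof -
  obtain n d where nd: "quotient_of z = (n, d)" by (cases "quotient_of z") auto
  have d: "d > 0" using quotient_of_denom_pos[OF nd] .
  have znd: "z = of_int n / of_int d" using quotient_of_div[OF nd] .
  define P where "P = int p"
  have Pp: "prime P" using p unfolding P_def by simp
  have nu: "\<not> is_unit P" using Pp not_prime_unit by blast
  define j where "j = multiplicity P d"
  obtain d' where d': "d = P ^ j * d'" "\<not> P dvd d'"
    using multiplicity_decompose'[of d P] d nu unfolding j_def by auto
  have d'0: "d' \<noteq> 0" using d' d by auto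
  have "1 / real p < 1" using prime_gt_1_nat[OF p] by simp
  then obtain k where k: "(1 / real p) ^ k < \<epsilon>" using real_arch_pow_inv[OF eps] by blast
  have cop: "coprime d' (P ^ (k + j))" using d'(2) Pp
    by (simp add: prime_imp_coprime coprime_commute)
  obtain u v where uv: "u * d' + v * P ^ (k + j) = 1" using bezout_int[of d' "P ^ (k + j)"] cop by auto
  define y :: rat where "y = of_int (n * u) / of_int (P ^ j)"
  have P0: "(of_int P :: rat) \<noteq> 0" using Pp by (auto simp: P_def)
  have uvq: "of_int u * of_int d' + of_int v * of_int P ^ (k + j) = (1 :: rat)"
    using arg_cong[OF uv, of "of_int :: int \<Rightarrow> rat"] by simp
  have "z - y = of_int n / (of_int P ^ j * of_int d') - of_int n * of_int u / of_int P ^ j"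
    unfolding znd y_def d'(1) by simp
  also have "\<dots> = of_int n * (1 - of_int u * of_int d') / (of_int P ^ j * of_int d')"
    using P0 d'0 by (simp add: field_simps)
  also have "\<dots> = of_int n * (of_int v * of_int P ^ (k + j)) / (of_int P ^ j * of_int d')"
  proof -
    have "1 - of_int u * of_int d' = of_int v * (of_int P :: rat) ^ (k + j)" using uvq by (simp add: algebra_simps)
    thus ?thesis by (simp only:)
  qed
  also have "\<dots> = of_int (n * v) * of_int P ^ k / of_int d'"
    using P0 d'0 by (simp add: field_simps power_add)
  finally have zy: "z - y = of_int (n * v) * (of_nat p) ^ k / of_int d'" unfolding P_def by simp
  have "rat_pabs p (z - y) = rat_pabs p (of_int (n * v)) * (1 / real p) ^ k / rat_pabs p (of_int d')"
    unfolding zy using pabs_mult[OF p] pabs_divide[OF p] pabs_power[OF p] pabs_nat_prime_self[OF p] by simp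
  also have "rat_pabs p (of_int d') = 1" using pabs_int_notdvd[OF p] d'(2) unfolding P_def by simp
  finally have e1: "rat_pabs p (z - y) = rat_pabs p (of_int (n * v)) * (1 / real p) ^ k" by simp
  have "rat_pabs p (of_int (n * v)) * (1 / real p) ^ k \<le> 1 * (1 / real p) ^ k"
    by (rule mult_right_mono) (use pabs_int_le1[OF p, of "n * v"] in auto)
  hence "rat_pabs p (z - y) \<le> (1 / real p) ^ k" using e1 by simp
  hence 1: "rat_pabs p (z - y) < \<epsilon>" using k by simp
  have 2: "rat_pabs l y \<le> 1" if l: "prime l" "l \<noteq> p" for l
  proof -
    have "rat_pabs l (of_int (P ^ j)) = 1"
      using pabs_power[OF l(1), of "of_nat p" j] pabs_nat_prime_other[OF l(1) p] l(2) unfolding P_def by simp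
    thus ?thesis unfolding y_def using pabs_divide[OF l(1)] pabs_int_le1[OF l(1), of "n * u"] by simp
  qed
  show ?thesis using 1 2 by blast
qed

lemma strong_approx:
  assumes F: "finite F" "\<forall>p\<in>F. prime p" and del: "\<delta> > 0"
  shows "\<exists>q0 (M::int). M > 0 \<and> (\<forall>p\<in>F. rat_pabs p (q0 - \<beta> p) < \<delta> \<and> rat_pabs p (of_int M) < \<delta>) \<and>
          (\<forall>l. prime l \<longrightarrow> l \<notin> F \<longrightarrow> rat_pabs l q0 \<le> 1)"
  using F
proof (induction F rule: finite_induct)
  case empty
  show ?case by (intro exI[of _ 0] exI[of _ 1]) simp
next
  case (insert p F)
  have p: "prime p" using insert by simp
  obtain q0 M where IH: "M > 0" "\<forall>p\<in>F. rat_pabs p (q0 - \<beta> p) < \<delta> \<and> rat_pabs p (of_int M) < \<delta>"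
      "\<forall>l. prime l \<longrightarrow> l \<notin> F \<longrightarrow> rat_pabs l q0 \<le> 1"
    using insert by blast
  have Mp: "rat_pabs p (of_int M) > 0" using pabs_pos[OF p] IH(1) by simp
  define z where "z = (\<beta> p - q0) / of_int M"
  obtain y where y: "rat_pabs p (z - y) < \<delta> / rat_pabs p (of_int M)"
    "\<forall>l. prime l \<longrightarrow> l \<noteq> p \<longrightarrow> rat_pabs l y \<le> 1"
    using single_prime_approx[OF p, of "\<delta> / rat_pabs p (of_int M)" z] del Mp by auto
  have "1 / real p < 1" using prime_gt_1_nat[OF p] by simp
  then obtain k where k: "(1 / real p) ^ k < \<delta>" using real_arch_pow_inv[OF del] by blast
  define q0' where "q0' = q0 + of_int M * y"
  define M' where "M' = M * int p ^ k"
  have M'0: "M' > 0" unfolding M'_def using IH(1) prime_gt_0_nat[OF p] by simp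
  have A: "rat_pabs p (q0' - \<beta> p) < \<delta>"
  proof -
    have "q0' - \<beta> p = of_int M * (y - z)" unfolding q0'_def z_def using IH(1) by (simp add: field_simps)
    hence "rat_pabs p (q0' - \<beta> p) = rat_pabs p (of_int M) * rat_pabs p (z - y)"
      using pabs_mult[OF p] pabs_swap[OF p, of y z] by simp
    also have "\<dots> < rat_pabs p (of_int M) * (\<delta> / rat_pabs p (of_int M))"
      using y(1) Mp by (intro mult_strict_left_mono) auto
    also have "\<dots> = \<delta>" using Mp by simp
    finally show ?thesis .
  qed
  have B: "rat_pabs p (of_int M') < \<delta>"
  proof -
    have "rat_pabs p (of_int M') = rat_pabs p (of_int M) * (1 / real p) ^ k"
      unfolding M'_def using pabs_mult[OF p] pabs_power[OF p] pabs_nat_prime_self[OF p] by simp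
    also have "\<dots> \<le> (1 / real p) ^ k" by (rule le1_mult) (use pabs_int_le1[OF p, of M] in auto)
    finally show ?thesis using k by simp
  qed
  have C: "rat_pabs p' (q0' - \<beta> p') < \<delta> \<and> rat_pabs p' (of_int M') < \<delta>" if p': "p' \<in> F" for p'
  proof -
    have pp': "prime p'" "p' \<noteq> p" using p' insert by auto
    have "rat_pabs p' (of_int M * y) = rat_pabs p' (of_int M) * rat_pabs p' y" by (rule pabs_mult[OF pp'(1)])
    also have "\<dots> \<le> rat_pabs p' (of_int M)" by (rule le1_mult') (use y(2) pp' pabs_nonneg in auto)
    moreover have "rat_pabs p' (of_int M) < \<delta>" using IH(2) p' by blast
    ultimately have My: "rat_pabs p' (of_int M * y) < \<delta>" by linarith
    have "rat_pabs p' (q0' - \<beta> p') = rat_pabs p' ((q0 - \<beta> p') + of_int M * y)" unfolding q0'_def by (simp add: algebra_simps)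
    also have "\<dots> \<le> max (rat_pabs p' (q0 - \<beta> p')) (rat_pabs p' (of_int M * y))" by (rule pabs_ultra[OF pp'(1)])
    moreover have "rat_pabs p' (q0 - \<beta> p') < \<delta>" using IH(2) p' by blast
    ultimately have 1: "rat_pabs p' (q0' - \<beta> p') < \<delta>" using My by simp
    have "rat_pabs p' (of_int M') = rat_pabs p' (of_int M)"
      unfolding M'_def using pabs_mult[OF pp'(1)] pabs_power[OF pp'(1)] pabs_nat_prime_other[OF pp'(1) p pp'(2)[symmetric]]
      by simp
    moreover have "rat_pabs p' (of_int M) < \<delta>" using IH(2) p' by blast
    ultimately show ?thesis using 1 by simp
  qed
  have D: "rat_pabs l q0' \<le> 1" if l: "prime l" "l \<notin> insert p F" for l
  proof -
    have "rat_pabs l q0' \<le> max (rat_pabs l q0) (rat_pabs l (of_int M * y))" unfolding q0'_def by (rule pabs_ultra[OF l(1)])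
    moreover have "rat_pabs l q0 \<le> 1" using IH(3) l by simp
    moreover have "rat_pabs l (of_int M * y) \<le> 1"
    proof -
      have "rat_pabs l (of_int M * y) = rat_pabs l (of_int M) * rat_pabs l y" by (rule pabs_mult[OF l(1)])
      moreover have "rat_pabs l y \<le> 1" using y(2) l by auto
      ultimately show ?thesis using pabs_int_le1[OF l(1), of M] pabs_nonneg[of l] by (simp add: mult_le_one)
    qed
    ultimately show ?thesis by simp
  qed
  show ?case using A B C D M'0 by (intro exI[of _ q0'] exI[of _ M']) auto
qed

lemma approx_family:
  assumes M: "M > 0" and F: "\<forall>p\<in>F. prime p"
    and h: "\<forall>p\<in>F. rat_pabs p (q0 - \<beta> p) < \<delta> \<and> rat_pabs p (of_int M) < \<delta>"
    and h2: "\<forall>l. prime l \<longrightarrow> l \<notin> F \<longrightarrow> rat_pabs l q0 \<le> 1"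
    and L: "L > 0" "\<forall>p\<in>F. \<not> p dvd L"
  shows "\<forall>p\<in>F. rat_pabs p (q0 + of_int M * of_int t / of_nat L - \<beta> p) < \<delta>"
    "\<forall>p. prime p \<longrightarrow> p \<notin> F \<longrightarrow> rat_pabs p (q0 + of_int M * of_int t / of_nat L) * rat_pabs p (of_nat L) \<le> 1"
proof -
  show "\<forall>p\<in>F. rat_pabs p (q0 + of_int M * of_int t / of_nat L - \<beta> p) < \<delta>"
  proof
    fix p assume pF: "p \<in> F"
    have p: "prime p" using F pF by simp
    have "\<not> int p dvd int L" using L(2) pF by simp
    hence L1: "rat_pabs p (of_nat L) = 1" using pabs_int_notdvd[OF p, of "int L"] by simp
    have "rat_pabs p (of_int M * of_int t / of_nat L) = rat_pabs p (of_int M) * rat_pabs p (of_int t)"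
      using pabs_mult[OF p] pabs_divide[OF p] L1 by simp
    also have "\<dots> \<le> rat_pabs p (of_int M)" by (rule le1_mult') (use pabs_int_le1[OF p, of t] pabs_nonneg in auto)
    moreover have hp: "rat_pabs p (q0 - \<beta> p) < \<delta>" "rat_pabs p (of_int M) < \<delta>" using h pF by blast+
    ultimately have "rat_pabs p (of_int M * of_int t / of_nat L) < \<delta>" by linarith
    moreover have "rat_pabs p (q0 + of_int M * of_int t / of_nat L - \<beta> p) \<le>
        max (rat_pabs p (q0 - \<beta> p)) (rat_pabs p (of_int M * of_int t / of_nat L))"
      using pabs_ultra[OF p, of "q0 - \<beta> p" "of_int M * of_int t / of_nat L"] by (simp add: algebra_simps)
    ultimately show "rat_pabs p (q0 + of_int M * of_int t / of_nat L - \<beta> p) < \<delta>" using hp by simp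
  qed
  show "\<forall>p. prime p \<longrightarrow> p \<notin> F \<longrightarrow> rat_pabs p (q0 + of_int M * of_int t / of_nat L) * rat_pabs p (of_nat L) \<le> 1"
  proof (intro allI impI)
    fix p :: nat assume p: "prime p" and pF: "p \<notin> F"
    have L0: "(of_nat L :: rat) \<noteq> 0" using L by simp
    have "rat_pabs p (q0 + of_int M * of_int t / of_nat L) * rat_pabs p (of_nat L) =
          rat_pabs p (q0 * of_nat L + of_int (M * t))"
    proof -
      have eq: "(q0 + of_int M * of_int t / of_nat L) * of_nat L = q0 * of_nat L + of_int (M * t)"
        using L0 by (simp add: field_simps)
      show ?thesis using pabs_mult[OF p, of "q0 + of_int M * of_int t / of_nat L" "of_nat L"] unfolding eq by simp
    qed
    also have "\<dots> \<le> max (rat_pabs p (q0 * of_nat L)) (rat_pabs p (of_int (M * t)))" by (rule pabs_ultra[OF p])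
    also have "\<dots> \<le> 1"
    proof -
      have "rat_pabs p (q0 * of_nat L) = rat_pabs p q0 * rat_pabs p (of_int (int L))" using pabs_mult[OF p] by simp
      moreover have "rat_pabs p q0 \<le> 1" using h2 p pF by simp
      ultimately have "rat_pabs p (q0 * of_nat L) \<le> 1"
        using pabs_int_le1[OF p, of "int L"] pabs_nonneg[of p] by (simp add: mult_le_one)
      thus ?thesis using pabs_int_le1[OF p, of "M * t"] by simp
    qed
    finally show "rat_pabs p (q0 + of_int M * of_int t / of_nat L) * rat_pabs p (of_nat L) \<le> 1" .
  qed
qed

lemma real_approx: assumes M: "M > (0::int)" and L: "L > (0::nat)"
  shows "\<exists>t::int. q0 + of_int M * of_int t / of_nat L \<noteq> 0 \<and>
      \<bar>of_rat (q0 + of_int M * of_int t / of_nat L) - x\<bar> \<le> real_of_int M / real L"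
proof -
  define h where "h = real_of_int M / real L"
  have h0: "h > 0" unfolding h_def using M L by simp
  define T where "T = \<lfloor>(x - of_rat q0) / h\<rfloor>"
  have T1: "real_of_int T \<le> (x - of_rat q0) / h" "(x - of_rat q0) / h < real_of_int T + 1"
    unfolding T_def by linarith+
  have T2: "of_rat q0 + real_of_int T * h \<le> x" "x < of_rat q0 + (real_of_int T + 1) * h"
    using T1 h0 by (simp_all add: field_simps)
  have ofr: "of_rat (q0 + of_int M * of_int t / of_nat L) = of_rat q0 + real_of_int t * h" for t
    unfolding h_def by (simp add: of_rat_add of_rat_mult of_rat_divide)
  show ?thesis
  proof (cases "q0 + of_int M * of_int T / of_nat L = 0")
    case False
    have "\<bar>of_rat (q0 + of_int M * of_int T / of_nat L) - x\<bar> \<le> h" unfolding ofr using T2 by (simp add: algebra_simps)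
    thus ?thesis using False unfolding h_def by blast
  next
    case True
    have "q0 + of_int M * of_int (T + 1) / of_nat L = (q0 + of_int M * of_int T / of_nat L) + of_int M / of_nat L"
      by (simp add: add_divide_distrib[symmetric] distrib_left)
    hence "q0 + of_int M * of_int (T + 1) / of_nat L = of_int M / of_nat L"
      using True by simp
    hence nz: "q0 + of_int M * of_int (T + 1) / of_nat L \<noteq> 0" using M L by simp
    have "\<bar>of_rat (q0 + of_int M * of_int (T + 1) / of_nat L) - x\<bar> \<le> h"
      unfolding ofr using T2 ofr[of T] True by (simp add: algebra_simps)
    thus ?thesis using nz unfolding h_def by blast
  qed
qed


lemma dist_smult_same: assumes p: "prime p" and x: "x \<in> Qp p" and y: "y \<in> Qp p"
  shows "padic_dist p (padic_smult p q x) (padic_smult p q y) = rat_pabs p q * padic_dist p x y"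
proof -
  obtain s where s: "padic_cauchy p s" "x = padic_class p s" using Qp_obtain[OF p x] by blast
  obtain t where t: "padic_cauchy p t" "y = padic_class p t" using Qp_obtain[OF p y] by blast
  have "(\<lambda>n. rat_pabs p (q * s n - q * t n)) \<longlonglongrightarrow>
        padic_dist p (padic_class p (\<lambda>n. q * s n)) (padic_class p (\<lambda>n. q * t n))"
    by (rule dist_class_tendsto[OF p cauchy_smult[OF p s(1)] cauchy_smult[OF p t(1)]])
  moreover have "(\<lambda>n. rat_pabs p (q * s n - q * t n)) = (\<lambda>n. rat_pabs p q * rat_pabs p (s n - t n))"
    using pabs_mult[OF p] by (simp add: right_diff_distrib[symmetric])
  moreover have "(\<lambda>n. rat_pabs p q * rat_pabs p (s n - t n)) \<longlonglongrightarrow> rat_pabs p q * padic_dist p x y"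
    unfolding s(2) t(2) by (intro tendsto_mult tendsto_const dist_class_tendsto[OF p s(1) t(1)])
  ultimately have "padic_dist p (padic_class p (\<lambda>n. q * s n)) (padic_class p (\<lambda>n. q * t n)) =
     rat_pabs p q * padic_dist p x y" using LIMSEQ_unique by metis
  thus ?thesis using smult_class[OF p s(1)] smult_class[OF p t(1)] s(2) t(2) by simp
qed

lemma target_approx:
  assumes p: "prime p" and x: "x \<in> Qp p" "x \<noteq> padic_zero p" and y: "y \<in> Qp p" and r: "r > 0"
  shows "\<exists>\<beta> \<delta>. \<delta> > 0 \<and> (\<forall>q. rat_pabs p (q - \<beta>) < \<delta> \<longrightarrow> padic_dist p y (padic_smult p q x) < r)"
proof -
  define A where "A = padic_abs p x"
  have A0: "A > 0" unfolding A_def using abs_nonneg[OF p x(1)] abs_eq0_iff[OF p x(1)] x(2) by simp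
  obtain \<gamma> where \<gamma>: "padic_dist p y (padic_class p (\<lambda>n. \<gamma>)) < r" using rat_approx[OF p y r] by blast
  define M where "M = rat_pabs p \<gamma> / A + 1"
  have g0: "rat_pabs p \<gamma> / A \<ge> 0" using A0 pabs_nonneg[of p \<gamma>] by simp
  hence M0: "M > 0" unfolding M_def by linarith
  have mpos: "min A (r / M) > 0" using A0 r M0 by simp
  obtain \<alpha> where \<alpha>: "padic_dist p x (padic_class p (\<lambda>n. \<alpha>)) < min A (r / M)"
    using rat_approx[OF p x(1) mpos] by blast
  define ca where "ca = padic_class p (\<lambda>n. \<alpha>)"
  have caQ: "ca \<in> Qp p" unfolding ca_def by (rule const_in_Qp[OF p])
  have d\<alpha>: "padic_dist p x ca < A" "padic_dist p x ca < r / M" using \<alpha> unfolding ca_def by auto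
  have "padic_abs p ca \<le> max (padic_abs p x) (padic_dist p x ca)" by (rule abs_le_max_dist[OF p x(1) caQ])
  hence le1: "padic_abs p ca \<le> A" using d\<alpha>(1) unfolding A_def by simp
  have "padic_abs p x \<le> max (padic_abs p ca) (padic_dist p ca x)" by (rule abs_le_max_dist[OF p caQ x(1)])
  moreover have "padic_dist p ca x = padic_dist p x ca" by (rule dist_sym[OF p caQ x(1)])
  ultimately have le2: "A \<le> padic_abs p ca" using d\<alpha>(1) unfolding A_def by (auto simp: max_def split: if_splits)
  have a\<alpha>: "rat_pabs p \<alpha> = A" using le1 le2 abs_const[OF p] unfolding ca_def by simp
  hence \<alpha>0: "\<alpha> \<noteq> 0" using A0 by auto
  define \<beta> where "\<beta> = \<gamma> / \<alpha>"
  define \<delta> where "\<delta> = min 1 (r / A)"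
  have \<delta>0: "\<delta> > 0" unfolding \<delta>_def using r A0 by simp
  have pb: "rat_pabs p \<beta> = rat_pabs p \<gamma> / A" unfolding \<beta>_def using pabs_divide[OF p] a\<alpha> by simp
  have main: "padic_dist p y (padic_smult p q x) < r" if q: "rat_pabs p (q - \<beta>) < \<delta>" for q
  proof -
    define cg where "cg = padic_class p (\<lambda>n. \<gamma>)"
    define cq where "cq = padic_class p (\<lambda>n. q * \<alpha>)"
    have cgQ: "cg \<in> Qp p" unfolding cg_def by (rule const_in_Qp[OF p])
    have cqQ: "cq \<in> Qp p" unfolding cq_def by (rule const_in_Qp[OF p])
    have qxQ: "padic_smult p q x \<in> Qp p" by (rule smult_in_Qp[OF p x(1)])
    have d1: "padic_dist p y cg < r" using \<gamma> unfolding cg_def .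
    have "padic_dist p cg cq = rat_pabs p (\<gamma> - q * \<alpha>)" unfolding cg_def cq_def by (rule dist_const[OF p])
    also have "\<gamma> - q * \<alpha> = \<alpha> * (\<beta> - q)" unfolding \<beta>_def using \<alpha>0 by (simp add: field_simps)
    also have "rat_pabs p (\<alpha> * (\<beta> - q)) = A * rat_pabs p (q - \<beta>)"
      using pabs_mult[OF p] a\<alpha> pabs_swap[OF p, of \<beta> q] by simp
    also have "\<dots> < A * (r / A)"
      using q A0 unfolding \<delta>_def by (intro mult_strict_left_mono) auto
    also have "\<dots> = r" using A0 by simp
    finally have d2: "padic_dist p cg cq < r" .
    have "padic_smult p q ca = cq" unfolding ca_def cq_def by (rule smult_const[OF p])
    hence "padic_dist p cq (padic_smult p q x) = rat_pabs p q * padic_dist p ca x"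
      using dist_smult_same[OF p caQ x(1), of q] by simp
    also have "padic_dist p ca x = padic_dist p x ca" by (rule dist_sym[OF p caQ x(1)])
    also have "rat_pabs p q * padic_dist p x ca \<le> M * padic_dist p x ca"
    proof (rule mult_right_mono)
      have "rat_pabs p q \<le> max (rat_pabs p (q - \<beta>)) (rat_pabs p \<beta>)"
        using pabs_ultra[OF p, of "q - \<beta>" \<beta>] by simp
      moreover have "rat_pabs p (q - \<beta>) \<le> 1" using q unfolding \<delta>_def by simp
      ultimately show "rat_pabs p q \<le> M" unfolding M_def using pb g0
        by (auto simp: max_def split: if_splits)
      show "0 \<le> padic_dist p x ca" by (rule dist_nonneg[OF p x(1) caQ])
    qed
    also have "\<dots> < M * (r / M)" using d\<alpha>(2) M0 by (intro mult_strict_left_mono) auto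
    also have "\<dots> = r" using M0 by simp
    finally have d3: "padic_dist p cq (padic_smult p q x) < r" .
    have "padic_dist p cg (padic_smult p q x) \<le> max (padic_dist p cg cq) (padic_dist p cq (padic_smult p q x))"
      by (rule dist_ultra[OF p cgQ cqQ qxQ])
    hence d4: "padic_dist p cg (padic_smult p q x) < r" using d2 d3 by simp
    have "padic_dist p y (padic_smult p q x) \<le> max (padic_dist p y cg) (padic_dist p cg (padic_smult p q x))"
      by (rule dist_ultra[OF p y cgQ qxQ])
    thus ?thesis using d1 d4 by simp
  qed
  show ?thesis using \<delta>0 main by blast
qed


lemma box_hit:
  assumes a: "a \<in> adeles" and c: "c \<in> adeles" and g: "good_box c F1 r e" and bad: "badset a \<subseteq> F1"
    and zp: "\<forall>p. prime p \<longrightarrow> fst a p = padic_zero p \<longrightarrow> fst c p = padic_zero p"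
    and zi: "snd a = 0 \<longrightarrow> snd c = 0"
    and F'def: "F' = {p \<in> F1. prime p \<and> fst a p \<noteq> padic_zero p}"
    and tgt: "\<forall>p\<in>F'. \<forall>q. rat_pabs p (q - \<beta> p) < \<delta> \<longrightarrow> padic_dist p (fst c p) (padic_smult p q (fst a p)) < r"
    and M: "M > 0" and h: "\<forall>p\<in>F'. rat_pabs p (q0 - \<beta> p) < \<delta> \<and> rat_pabs p (of_int M) < \<delta>"
    and h2: "\<forall>l. prime l \<longrightarrow> l \<notin> F' \<longrightarrow> rat_pabs l q0 \<le> 1"
    and L: "L > 0" "\<forall>p\<in>F'. \<not> p dvd L"
    and H: "\<forall>p. prime p \<longrightarrow> p \<notin> F1 \<longrightarrow> fst a p \<noteq> padic_zero p \<longrightarrow> padic_abs p (fst a p) \<le> rat_pabs p (of_nat L)"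
    and qdef: "q = q0 + of_int M * of_int t / of_nat L"
    and qnz: "q \<noteq> 0"
    and re: "snd a = 0 \<or> (\<bar>of_rat q - snd c / snd a\<bar> \<le> real_of_int M / real L \<and> \<bar>snd a\<bar> * real_of_int M / real L < e)"
  shows "rat_act q a \<in> abox c F1 r e"
proof -
  have F'p: "\<forall>p\<in>F'. prime p" using F'def by simp
  have fam1: "\<forall>p\<in>F'. rat_pabs p (q - \<beta> p) < \<delta>"
    using approx_family(1)[OF M F'p h h2 L, of t] qdef by simp
  have fam2: "\<forall>p. prime p \<longrightarrow> p \<notin> F' \<longrightarrow> rat_pabs p q * rat_pabs p (of_nat L) \<le> 1"
    using approx_family(2)[OF M F'p h h2 L, of t] qdef by simp
  have r0: "r > 0" and e0: "e > 0" using g unfolding good_box_def by auto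
  have P: "fst (rat_act q a) p \<in> (if p \<in> F1 then pball p (fst c p) r else Zp p)" if p: "prime p" for p
  proof -
    have aq: "fst a p \<in> Qp p" by (rule adeles_Qp[OF a p])
    have cq: "fst c p \<in> Qp p" by (rule adeles_Qp[OF c p])
    have fx: "fst (rat_act q a) p = padic_smult p q (fst a p)" by (rule rat_act_fst[OF p])
    have xq: "padic_smult p q (fst a p) \<in> Qp p" by (rule smult_in_Qp[OF p aq])
    show ?thesis
    proof (cases "p \<in> F1")
      case True
      show ?thesis
      proof (cases "fst a p = padic_zero p")
        case z: True
        hence "padic_smult p q (fst a p) = fst c p" using zp p smult_zero[OF p] by simp
        thus ?thesis using True fx pball_center[OF p cq r0] by simp
      next
        case nz: False
        hence "p \<in> F'" using True p F'def by simp
        hence "padic_dist p (fst c p) (padic_smult p q (fst a p)) < r" using tgt fam1 by blast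
        thus ?thesis using True fx xq unfolding pball_def by simp
      qed
    next
      case False
      have "padic_smult p q (fst a p) \<in> Zp p"
      proof (cases "fst a p = padic_zero p")
        case True thus ?thesis using smult_zero[OF p] zero_in_Zp[OF p] by simp
      next
        case nz: False
        have pF': "p \<notin> F'" using False F'def by simp
        have "padic_abs p (padic_smult p q (fst a p)) = rat_pabs p q * padic_abs p (fst a p)"
          by (rule abs_smult[OF p aq])
        also have "\<dots> \<le> rat_pabs p q * rat_pabs p (of_nat L)"
          using H p False nz pabs_nonneg[of p q] by (intro mult_left_mono) auto
        also have "\<dots> \<le> 1" using fam2 p pF' by blast
        finally show ?thesis using xq unfolding Zp_def by simp
      qed
      thus ?thesis using False fx by simp
    qed
  qed
  have R: "dist (snd c) (snd (rat_act q a)) < e"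
  proof (cases "snd a = 0")
    case True
    thus ?thesis using zi e0 rat_act_snd by simp
  next
    case False
    hence re': "\<bar>of_rat q - snd c / snd a\<bar> \<le> real_of_int M / real L" "\<bar>snd a\<bar> * real_of_int M / real L < e"
      using re by auto
    have "dist (snd c) (snd (rat_act q a)) = \<bar>snd a\<bar> * \<bar>of_rat q - snd c / snd a\<bar>"
      unfolding dist_real_def rat_act_snd using False by (simp add: abs_mult[symmetric] algebra_simps)
    also have "\<dots> \<le> \<bar>snd a\<bar> * (real_of_int M / real L)" using re'(1) by (intro mult_left_mono) auto
    also have "\<dots> < e" using re'(2) by simp
    finally show ?thesis .
  qed
  have A: "rat_act q a \<in> adeles" by (rule rat_act_adeles[OF a qnz])
  show ?thesis unfolding box_mem using A P R by blast
qed


lemma pabs_prod_primes: assumes p: "prime p" and Ls: "finite Ls" "\<forall>l\<in>Ls. prime l"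
  shows "rat_pabs p (of_nat (\<Prod>Ls)) = (if p \<in> Ls then 1 / real p else 1)"
proof -
  have "rat_pabs p (of_nat (\<Prod>Ls)) = rat_pabs p (\<Prod>l\<in>Ls. of_nat l)" by (simp add: of_nat_prod)
  also have "\<dots> = (\<Prod>l\<in>Ls. rat_pabs p (of_nat l))" by (rule pabs_prod[OF p])
  also have "\<dots> = (\<Prod>l\<in>Ls. (if l = p then 1 / real p else 1))"
    by (rule prod.cong) (use Ls pabs_nat_prime_self[OF p] pabs_nat_prime_other[OF p] in auto)
  also have "\<dots> = (if p \<in> Ls then 1 / real p else 1)" using Ls(1) by simp
  finally show ?thesis .
qed

lemma density:
  assumes a: "a \<in> adeles" and ninv: "\<not> adele_invertible a" and c: "c \<in> adeles"
    and z: "zeroset a \<subseteq> zeroset c"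
  shows "c \<in> adele_topology closure_of orbit a"
  unfolding in_closure_iff
proof (intro conjI allI impI c)
  fix F r e assume g: "good_box c F r e"
  define F1 where "F1 = F \<union> badset a"
  have g1: "good_box c F1 r e" using g badset_finite[OF a] unfolding good_box_def F1_def by auto
  have sub: "abox c F1 r e \<subseteq> abox c F r e"
    by (rule box_mono) (use g in \<open>auto simp: F1_def good_box_def\<close>)
  have bad: "badset a \<subseteq> F1" unfolding F1_def by simp
  have r0: "r > 0" and e0: "e > 0" and fF1: "finite F1" using g1 unfolding good_box_def by auto
  have zp: "\<forall>p. prime p \<longrightarrow> fst a p = padic_zero p \<longrightarrow> fst c p = padic_zero p"
  proof (intro allI impI)
    fix p :: nat assume "prime p" "fst a p = padic_zero p"
    hence "Some p \<in> zeroset a" unfolding zeroset_def by blast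
    hence "Some p \<in> zeroset c" using z by blast
    thus "fst c p = padic_zero p" unfolding zeroset_def by (auto split: if_splits)
  qed
  have zi: "snd a = 0 \<longrightarrow> snd c = 0"
  proof
    assume "snd a = 0"
    hence "None \<in> zeroset a" unfolding zeroset_def by simp
    hence "None \<in> zeroset c" using z by blast
    thus "snd c = 0" unfolding zeroset_def by (auto split: if_splits)
  qed
  define F' where "F' = {p \<in> F1. prime p \<and> fst a p \<noteq> padic_zero p}"
  have fF': "finite F'" unfolding F'_def using fF1 by simp
  have F'p: "\<forall>p\<in>F'. prime p" unfolding F'_def by simp
  have "\<forall>p\<in>F'. \<exists>bd. snd bd > 0 \<and> (\<forall>q. rat_pabs p (q - fst bd) < snd bd \<longrightarrow>
           padic_dist p (fst c p) (padic_smult p q (fst a p)) < r)"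
  proof
    fix p assume "p \<in> F'"
    hence p: "prime p" "fst a p \<noteq> padic_zero p" unfolding F'_def by auto
    obtain \<beta> \<delta> where "\<delta> > 0" "\<forall>q. rat_pabs p (q - \<beta>) < \<delta> \<longrightarrow> padic_dist p (fst c p) (padic_smult p q (fst a p)) < r"
      using target_approx[OF p(1) adeles_Qp[OF a p(1)] p(2) adeles_Qp[OF c p(1)] r0] by blast
    thus "\<exists>bd. snd bd > 0 \<and> (\<forall>q. rat_pabs p (q - fst bd) < snd bd \<longrightarrow>
           padic_dist p (fst c p) (padic_smult p q (fst a p)) < r)"
      by (intro exI[of _ "(\<beta>, \<delta>)"]) simp
  qed
  from bchoice[OF this] obtain BD where BD: "\<forall>p\<in>F'. snd (BD p) > 0 \<and> (\<forall>q. rat_pabs p (q - fst (BD p)) < snd (BD p) \<longrightarrow>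
           padic_dist p (fst c p) (padic_smult p q (fst a p)) < r)" by blast
  define \<beta> where "\<beta> = (\<lambda>p. fst (BD p))"
  define \<delta> where "\<delta> = Min (insert 1 ((\<lambda>p. snd (BD p)) ` F'))"
  have \<delta>0: "\<delta> > 0" unfolding \<delta>_def using fF' BD by (subst Min_gr_iff) auto
  have \<delta>le: "\<delta> \<le> snd (BD p)" if "p \<in> F'" for p unfolding \<delta>_def using fF' that by (intro Min_le) auto
  have tgt: "\<forall>p\<in>F'. \<forall>q. rat_pabs p (q - \<beta> p) < \<delta> \<longrightarrow> padic_dist p (fst c p) (padic_smult p q (fst a p)) < r"
  proof (intro ballI allI impI)
    fix p q assume p: "p \<in> F'" and q: "rat_pabs p (q - \<beta> p) < \<delta>"
    have "rat_pabs p (q - fst (BD p)) < snd (BD p)" using q \<delta>le[OF p] unfolding \<beta>_def by simp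
    thus "padic_dist p (fst c p) (padic_smult p q (fst a p)) < r" using BD p by blast
  qed
  obtain q0 M where SA: "M > 0" "\<forall>p\<in>F'. rat_pabs p (q0 - \<beta> p) < \<delta> \<and> rat_pabs p (of_int M) < \<delta>"
    "\<forall>l. prime l \<longrightarrow> l \<notin> F' \<longrightarrow> rat_pabs l q0 \<le> 1"
    using strong_approx[OF fF' F'p \<delta>0, of \<beta>] by blast
  define K where "K = \<bar>snd a\<bar> * real_of_int M / e"
  note hit = box_hit[OF a c g1 bad zp zi F'_def tgt SA(1) SA(2) SA(3)]
  have Zpa: "padic_abs p (fst a p) \<le> 1" if "prime p" "p \<notin> F1" for p
    using that bad adeles_Qp[OF a that(1)] unfolding badset_def Zp_def by auto
  have goal: "\<exists>q. q \<noteq> 0 \<and> rat_act q a \<in> abox c F1 r e"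
  proof (cases "snd a = 0")
    case True
    define t :: int where "t = (if q0 + of_int M \<noteq> 0 then 1 else 2)"
    have qnz: "q0 + of_int M * of_int t / of_nat 1 \<noteq> 0" unfolding t_def using SA(1) by auto
    have L1: "(1::nat) > 0" "\<forall>p\<in>F'. \<not> p dvd (1::nat)" using F'p by (auto simp: prime_gt_1_nat)
    have H1: "\<forall>p. prime p \<longrightarrow> p \<notin> F1 \<longrightarrow> fst a p \<noteq> padic_zero p \<longrightarrow> padic_abs p (fst a p) \<le> rat_pabs p (of_nat 1)"
      using Zpa by simp
    show ?thesis using hit[OF L1 H1 refl qnz] True qnz by blast
  next
    case sa: False
    have Lcase: "\<exists>q. q \<noteq> 0 \<and> rat_act q a \<in> abox c F1 r e"
      if L: "L > 0" "\<forall>p\<in>F'. \<not> p dvd L"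
      and H: "\<forall>p. prime p \<longrightarrow> p \<notin> F1 \<longrightarrow> fst a p \<noteq> padic_zero p \<longrightarrow> padic_abs p (fst a p) \<le> rat_pabs p (of_nat L)"
      and LK: "real L > K" for L :: nat
    proof -
      obtain t where t: "q0 + of_int M * of_int t / of_nat L \<noteq> 0"
        "\<bar>of_rat (q0 + of_int M * of_int t / of_nat L) - snd c / snd a\<bar> \<le> real_of_int M / real L"
        using real_approx[OF SA(1) L(1), of q0 "snd c / snd a"] by blast
      have "\<bar>snd a\<bar> * real_of_int M / e < real L" using LK unfolding K_def .
      hence "\<bar>snd a\<bar> * real_of_int M < real L * e" using e0 by (simp add: divide_less_eq)
      hence "\<bar>snd a\<bar> * real_of_int M / real L < e" using L(1) by (simp add: divide_less_eq mult.commute)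
      hence "rat_act (q0 + of_int M * of_int t / of_nat L) a \<in> abox c F1 r e"
        using hit[OF L H refl t(1)] t(2) by blast
      thus ?thesis using t(1) by blast
    qed
    show ?thesis
    proof (cases "\<exists>l. prime l \<and> fst a l = padic_zero l")
      case True
      then obtain l where l: "prime l" "fst a l = padic_zero l" by blast
      have "real l > 1" using prime_gt_1_nat[OF l(1)] by simp
      then obtain m where m: "K < real l ^ m" using real_arch_pow by blast
      have L: "l ^ m > 0" "\<forall>p\<in>F'. \<not> p dvd l ^ m"
      proof -
        show "l ^ m > 0" using prime_gt_0_nat[OF l(1)] by simp
        show "\<forall>p\<in>F'. \<not> p dvd l ^ m"
        proof (intro ballI notI)
          fix p assume pF: "p \<in> F'" and d: "p dvd l ^ m"
          have pp: "prime p" "fst a p \<noteq> padic_zero p" using pF unfolding F'_def by auto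
          have "p dvd l" using prime_dvd_power[OF pp(1) d] .
          hence "p = l" using primes_dvd_imp_eq[OF pp(1) l(1)] by simp
          thus False using pp(2) l(2) by simp
        qed
      qed
      have H: "\<forall>p. prime p \<longrightarrow> p \<notin> F1 \<longrightarrow> fst a p \<noteq> padic_zero p \<longrightarrow> padic_abs p (fst a p) \<le> rat_pabs p (of_nat (l ^ m))"
      proof (intro allI impI)
        fix p :: nat assume p: "prime p" "p \<notin> F1" "fst a p \<noteq> padic_zero p"
        have "p \<noteq> l" using p(3) l(2) by auto
        hence "rat_pabs p (of_nat (l ^ m)) = 1"
          using pabs_power[OF p(1), of "of_nat l" m] pabs_nat_prime_other[OF p(1) l(1)] by simp
        thus "padic_abs p (fst a p) \<le> rat_pabs p (of_nat (l ^ m))" using Zpa[OF p(1,2)] by simp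
      qed
      show ?thesis using Lcase[OF L H] m by simp
    next
      case False
      hence nz: "\<forall>l. prime l \<longrightarrow> fst a l \<noteq> padic_zero l" by blast
      have inf: "infinite {p. prime p \<and> fst a p \<notin> Zp_units p}"
        using ninv nz sa unfolding adele_invertible_def by blast
      hence inf2: "infinite ({p. prime p \<and> fst a p \<notin> Zp_units p} - F1)" using fF1 by simp
      obtain m where m: "K < (2::real) ^ m" using real_arch_pow[of 2 K] by auto
      obtain Ls where Ls: "finite Ls" "card Ls = m" "Ls \<subseteq> {p. prime p \<and> fst a p \<notin> Zp_units p} - F1"
        using infinite_arbitrarily_large[OF inf2] by blast
      have Lsp: "\<forall>l\<in>Ls. prime l" using Ls(3) by blast
      have L0: "\<Prod>Ls > (0::nat)" using Lsp prime_gt_0_nat by (simp add: prod_pos)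
      have "(2::nat) ^ m \<le> \<Prod>Ls"
      proof -
        have "(\<Prod>l\<in>Ls. (2::nat)) \<le> (\<Prod>l\<in>Ls. l)"
          by (rule prod_mono) (use Lsp prime_ge_2_nat in auto)
        thus ?thesis using Ls(2) by simp
      qed
      hence LK: "real (\<Prod>Ls) > K" using m by (metis of_nat_le_iff of_nat_numeral of_nat_power order_less_le_trans)
      have Ldvd: "\<forall>p\<in>F'. \<not> p dvd \<Prod>Ls"
      proof (intro ballI notI)
        fix p assume pF: "p \<in> F'" and d: "p dvd \<Prod>Ls"
        have pp: "prime p" "p \<in> F1" using pF unfolding F'_def by auto
        obtain l where "l \<in> Ls" "p dvd l" using prime_dvd_prod_iff[OF Ls(1) pp(1)] d by auto
        hence "l \<in> Ls" "p = l" using primes_dvd_imp_eq[OF pp(1)] Lsp by auto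
        thus False using Ls(3) pp(2) by blast
      qed
      have H: "\<forall>p. prime p \<longrightarrow> p \<notin> F1 \<longrightarrow> fst a p \<noteq> padic_zero p \<longrightarrow> padic_abs p (fst a p) \<le> rat_pabs p (of_nat (\<Prod>Ls))"
      proof (intro allI impI)
        fix p :: nat assume p: "prime p" "p \<notin> F1" "fst a p \<noteq> padic_zero p"
        have e: "rat_pabs p (of_nat (\<Prod>Ls)) = (if p \<in> Ls then 1 / real p else 1)"
          by (rule pabs_prod_primes[OF p(1) Ls(1) Lsp])
        show "padic_abs p (fst a p) \<le> rat_pabs p (of_nat (\<Prod>Ls))"
        proof (cases "p \<in> Ls")
          case True
          hence "fst a p \<notin> Zp_units p" using Ls(3) by blast
          hence "padic_abs p (fst a p) \<noteq> 1" using adeles_Qp[OF a p(1)] unfolding Zp_units_def by simp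
          hence "padic_abs p (fst a p) < 1" using Zpa[OF p(1,2)] by simp
          hence "padic_abs p (fst a p) \<le> 1 / real p" by (rule abs_le1_power[OF p(1) adeles_Qp[OF a p(1)] p(3)])
          thus ?thesis using e True by simp
        next
          case False thus ?thesis using e Zpa[OF p(1,2)] by simp
        qed
      qed
      show ?thesis using Lcase[OF L0 Ldvd H LK] .
    qed
  qed
  then obtain q where q: "q \<noteq> 0" "rat_act q a \<in> abox c F1 r e" by blast
  hence "rat_act q a \<in> abox c F r e" using sub by blast
  moreover have "rat_act q a \<in> orbit a" unfolding orbit_def using q(1) by blast
  ultimately show "abox c F r e \<inter> orbit a \<noteq> {}" by blast
qed


lemma closure_noninv: assumes a: "a \<in> adeles" and ninv: "\<not> adele_invertible a"
  shows "adele_topology closure_of orbit a = {c \<in> adeles. zeroset a \<subseteq> zeroset c}"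
proof
  show "adele_topology closure_of orbit a \<subseteq> {c \<in> adeles. zeroset a \<subseteq> zeroset c}"
    using closure_zeroset[OF a] by blast
  show "{c \<in> adeles. zeroset a \<subseteq> zeroset c} \<subseteq> adele_topology closure_of orbit a"
    using density[OF a ninv] by blast
qed

lemma self_in_closure: "a \<in> adeles \<Longrightarrow> a \<in> adele_topology closure_of orbit a"
  using closure_of_subset[of "orbit a" adele_topology] orbit_self orbit_subset topspace_adele by blast

lemma chi_eq_iff: assumes a: "a \<in> adeles" and b: "b \<in> adeles"
  shows "chi a = chi b \<longleftrightarrow> adele_topology closure_of orbit a = adele_topology closure_of orbit b"
proof (cases "adele_invertible a")
  case ia: True
  show ?thesis
  proof (cases "adele_invertible b")
    case ib: True
    have "chi a = chi b \<longleftrightarrow> b \<in> orbit a" by (rule chi_inv_eq_iff[OF a ia b ib])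
    also have "\<dots> \<longleftrightarrow> orbit a = orbit b"
    proof
      assume "b \<in> orbit a"
      then obtain r where "r \<noteq> 0" "b = rat_act r a" unfolding orbit_def by blast
      thus "orbit a = orbit b" using orbit_act[OF a] by simp
    next
      assume "orbit a = orbit b" thus "b \<in> orbit a" using orbit_self[OF b] by simp
    qed
    finally show ?thesis using closure_invertible[OF a ia] closure_invertible[OF b ib] by simp
  next
    case ib: False
    have "chi a \<noteq> chi b" using chi_inv[OF ia] chi_noninv[OF ib] by simp
    moreover have "adele_topology closure_of orbit a \<noteq> adele_topology closure_of orbit b"
    proof
      assume e: "adele_topology closure_of orbit a = adele_topology closure_of orbit b"
      have "b \<in> orbit a" using self_in_closure[OF b] e closure_invertible[OF a ia] by simp
      then obtain r where "r \<noteq> 0" "b = rat_act r a" unfolding orbit_def by blast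
      thus False using rat_act_invertible[OF a ia] ib by simp
    qed
    ultimately show ?thesis by simp
  qed
next
  case ia: False
  show ?thesis
  proof (cases "adele_invertible b")
    case ib: True
    have "chi a \<noteq> chi b" using chi_inv[OF ib] chi_noninv[OF ia] by simp
    moreover have "adele_topology closure_of orbit a \<noteq> adele_topology closure_of orbit b"
    proof
      assume e: "adele_topology closure_of orbit a = adele_topology closure_of orbit b"
      have "a \<in> orbit b" using self_in_closure[OF a] e closure_invertible[OF b ib] by simp
      then obtain r where "r \<noteq> 0" "a = rat_act r b" unfolding orbit_def by blast
      thus False using rat_act_invertible[OF b ib] ia by simp
    qed
    ultimately show ?thesis by simp
  next
    case ib: False
    have "chi a = chi b \<longleftrightarrow> zeroset a = zeroset b" using chi_noninv[OF ia] chi_noninv[OF ib] by simp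
    also have "\<dots> \<longleftrightarrow> {c \<in> adeles. zeroset a \<subseteq> zeroset c} = {c \<in> adeles. zeroset b \<subseteq> zeroset c}"
    proof
      assume "zeroset a = zeroset b" thus "{c \<in> adeles. zeroset a \<subseteq> zeroset c} = {c \<in> adeles. zeroset b \<subseteq> zeroset c}"
        by simp
    next
      assume e: "{c \<in> adeles. zeroset a \<subseteq> zeroset c} = {c \<in> adeles. zeroset b \<subseteq> zeroset c}"
      have "a \<in> {c \<in> adeles. zeroset b \<subseteq> zeroset c}" using e a by blast
      moreover have "b \<in> {c \<in> adeles. zeroset a \<subseteq> zeroset c}" using e b by blast
      ultimately show "zeroset a = zeroset b" by blast
    qed
    finally show ?thesis using closure_noninv[OF a ia] closure_noninv[OF b ib] by simp
  qed
qed

definition adele_of_set :: "nat option set \<Rightarrow> adele" where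
  "adele_of_set T = ((\<lambda>p. if prime p then (if Some p \<in> T then padic_zero p else padic_class p (\<lambda>n. of_nat p)) else {}),
                     (if None \<in> T then 0 else 1))"

lemma adele_of_set_props: assumes T: "T \<subseteq> Pbar"
  shows "adele_of_set T \<in> adeles" "\<not> adele_invertible (adele_of_set T)" "zeroset (adele_of_set T) = T"
proof -
  define a where "a = adele_of_set T"
  have fa: "fst a p = (if Some p \<in> T then padic_zero p else padic_class p (\<lambda>n. of_nat p))" if "prime p" for p
    using that unfolding a_def adele_of_set_def by simp
  have cp: "padic_abs p (padic_class p (\<lambda>n. of_nat p)) = 1 / real p" if "prime p" for p
    using abs_const[OF that] pabs_nat_prime_self[OF that] by simp
  have cnz: "padic_class p (\<lambda>n. of_nat p) \<noteq> padic_zero p" if "prime p" for p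
    using const_eq_zero_iff[OF that] prime_gt_0_nat[OF that] by simp
  have Zp_all: "fst a p \<in> Zp p" if p: "prime p" for p
  proof (cases "Some p \<in> T")
    case True thus ?thesis using fa[OF p] zero_in_Zp[OF p] by simp
  next
    case False
    have "1 / real p \<le> 1" using prime_ge_1_nat[OF p] by simp
    thus ?thesis using fa[OF p] False cp[OF p] const_in_Qp[OF p] unfolding Zp_def by simp
  qed
  have A: "a \<in> adeles" unfolding adeles_def
  proof (intro CollectI conjI allI impI)
    fix p :: nat assume "prime p" thus "fst a p \<in> Qp p" using Zp_all unfolding Zp_def by blast
  next
    fix p :: nat assume "\<not> prime p" thus "fst a p = {}" unfolding a_def adele_of_set_def by simp
  next
    have "{p. prime p \<and> fst a p \<notin> Zp p} = {}" using Zp_all by blast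
    thus "finite {p. prime p \<and> fst a p \<notin> Zp p}" by (simp only: finite.emptyI)
  qed
  thus "adele_of_set T \<in> adeles" unfolding a_def .
  have Z: "zeroset a = T"
  proof
    show "zeroset a \<subseteq> T"
    proof
      fix z assume z: "z \<in> zeroset a"
      show "z \<in> T"
      proof (cases z)
        case None thus ?thesis using z unfolding zeroset_def a_def adele_of_set_def by (auto split: if_splits)
      next
        case (Some p)
        hence p: "prime p" "fst a p = padic_zero p" using z unfolding zeroset_def by (auto split: if_splits)
        thus ?thesis using fa[OF p(1)] cnz[OF p(1)] Some by (auto split: if_splits)
      qed
    qed
  next
    show "T \<subseteq> zeroset a"
    proof
      fix z assume z: "z \<in> T"
      show "z \<in> zeroset a"
      proof (cases z)
        case None thus ?thesis using z unfolding zeroset_def a_def adele_of_set_def by simp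
      next
        case (Some p)
        hence p: "prime p" using z T unfolding Pbar_def by auto
        hence "fst a p = padic_zero p" using fa[OF p] z Some by simp
        thus ?thesis unfolding zeroset_def using p Some by blast
      qed
    qed
  qed
  thus "zeroset (adele_of_set T) = T" unfolding a_def .
  show "\<not> adele_invertible (adele_of_set T)"
  proof
    assume inv: "adele_invertible (adele_of_set T)"
    hence nz: "\<forall>p. prime p \<longrightarrow> fst a p \<noteq> padic_zero p" "snd a \<noteq> 0"
      and fin: "finite {p. prime p \<and> fst a p \<notin> Zp_units p}" unfolding adele_invertible_def a_def by auto
    have "T = {}"
    proof (rule ccontr)
      assume "T \<noteq> {}"
      then obtain z where z: "z \<in> T" by blast
      hence "z \<in> zeroset a" using Z by simp
      thus False using nz unfolding zeroset_def by (auto split: if_splits)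
    qed
    hence "{p. prime p \<and> fst a p \<notin> Zp_units p} = {p. prime p}"
    proof -
      have "fst a p \<notin> Zp_units p" if p: "prime p" for p
      proof -
        have "padic_abs p (fst a p) = 1 / real p" using fa[OF p] \<open>T = {}\<close> cp[OF p] by simp
        moreover have "1 / real p \<noteq> 1" using prime_gt_1_nat[OF p] by simp
        ultimately show ?thesis unfolding Zp_units_def by auto
      qed
      thus ?thesis by blast
    qed
    thus False using fin primes_infinite by simp
  qed
qed

lemma chi_image: "chi ` adeles = chi_codomain"
proof
  show "chi ` adeles \<subseteq> chi_codomain"
  proof
    fix y assume "y \<in> chi ` adeles"
    then obtain a where a: "a \<in> adeles" "y = chi a" by blast
    show "y \<in> chi_codomain"
    proof (cases "adele_invertible a")
      case True
      thus ?thesis using a chi_inv chi_unit[OF a(1) True] unfolding chi_codomain_def by simp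
    next
      case False
      have "zeroset a \<subseteq> Pbar" unfolding zeroset_def Pbar_def by auto
      thus ?thesis using a chi_noninv[OF False] unfolding chi_codomain_def by simp
    qed
  qed
next
  show "chi_codomain \<subseteq> chi ` adeles"
  proof
    fix y assume "y \<in> chi_codomain"
    then consider (l) T where "T \<subseteq> Pbar" "y = Inl T" | (r) u where "u \<in> units_U" "y = Inr u"
      unfolding chi_codomain_def by blast
    thus "y \<in> chi ` adeles"
    proof cases
      case l
      have "chi (adele_of_set T) = Inl T"
        using chi_noninv adele_of_set_props[OF l(1)] by simp
      thus ?thesis using adele_of_set_props(1)[OF l(1)] l(2) by force
    next
      case r
      have "u \<in> adeles" using r(1) unfolding units_U_def by simp
      thus ?thesis using chi_units[OF r(1)] r(2) by force
    qed
  qed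
qed

theorem proposition3p4:
  shows "chi ` adeles = chi_codomain \<and>
         (\<forall>a\<in>adeles. \<forall>b\<in>adeles. chi a = chi b \<longleftrightarrow>
            adele_topology closure_of orbit a = adele_topology closure_of orbit b) \<and>
         (\<exists>f. bij_betw f (adeles // quasi_orbit_rel) chi_codomain \<and>
            (\<forall>a\<in>adeles. f (quasi_orbit_rel `` {a}) = chi a))"
proof (intro conjI)
  show "chi ` adeles = chi_codomain" by (rule chi_image)
  show E: "\<forall>a\<in>adeles. \<forall>b\<in>adeles. chi a = chi b \<longleftrightarrow>
            adele_topology closure_of orbit a = adele_topology closure_of orbit b"
    using chi_eq_iff by blast
  have cls: "quasi_orbit_rel `` {a} = {b \<in> adeles. chi b = chi a}" if a: "a \<in> adeles" for a
  proof (intro set_eqI iffI)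
    fix b assume "b \<in> quasi_orbit_rel `` {a}"
    hence b: "b \<in> adeles" "adele_topology closure_of orbit a = adele_topology closure_of orbit b"
      unfolding quasi_orbit_rel_def by auto
    hence "chi a = chi b" using chi_eq_iff[OF a b(1)] by simp
    thus "b \<in> {b \<in> adeles. chi b = chi a}" using b(1) by simp
  next
    fix b assume "b \<in> {b \<in> adeles. chi b = chi a}"
    hence b: "b \<in> adeles" "chi a = chi b" by auto
    hence "adele_topology closure_of orbit a = adele_topology closure_of orbit b" using chi_eq_iff[OF a b(1)] by simp
    thus "b \<in> quasi_orbit_rel `` {a}" unfolding quasi_orbit_rel_def using a b(1) by simp
  qed
  define f where "f = (\<lambda>X. chi (SOME a. a \<in> X))"
  have fcl: "f (quasi_orbit_rel `` {a}) = chi a" if a: "a \<in> adeles" for a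
  proof -
    have "a \<in> quasi_orbit_rel `` {a}" using cls[OF a] a by simp
    hence "(SOME b. b \<in> quasi_orbit_rel `` {a}) \<in> quasi_orbit_rel `` {a}" by (rule someI)
    thus ?thesis unfolding f_def using cls[OF a] by simp
  qed
  have "bij_betw f (adeles // quasi_orbit_rel) chi_codomain"
    unfolding bij_betw_def
  proof
    show "inj_on f (adeles // quasi_orbit_rel)"
    proof (rule inj_onI)
      fix X Y assume X: "X \<in> adeles // quasi_orbit_rel" and Y: "Y \<in> adeles // quasi_orbit_rel" and e: "f X = f Y"
      obtain a where a: "a \<in> adeles" "X = quasi_orbit_rel `` {a}" using X unfolding quotient_def by blast
      obtain b where b: "b \<in> adeles" "Y = quasi_orbit_rel `` {b}" using Y unfolding quotient_def by blast
      have "chi a = chi b" using e fcl a b by simp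
      thus "X = Y" using cls a b by simp
    qed
    show "f ` (adeles // quasi_orbit_rel) = chi_codomain"
    proof -
      have "f ` (adeles // quasi_orbit_rel) = chi ` adeles"
      proof
        show "f ` (adeles // quasi_orbit_rel) \<subseteq> chi ` adeles"
        proof
          fix y assume "y \<in> f ` (adeles // quasi_orbit_rel)"
          then obtain X where X: "X \<in> adeles // quasi_orbit_rel" "y = f X" by blast
          obtain a where a: "a \<in> adeles" "X = quasi_orbit_rel `` {a}" using X(1) unfolding quotient_def by blast
          show "y \<in> chi ` adeles" using X(2) a fcl by simp
        qed
        show "chi ` adeles \<subseteq> f ` (adeles // quasi_orbit_rel)"
        proof
          fix y assume "y \<in> chi ` adeles"
          then obtain a where a: "a \<in> adeles" "y = chi a" by blast
          have "quasi_orbit_rel `` {a} \<in> adeles // quasi_orbit_rel" using a(1) unfolding quotient_def by blast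
          thus "y \<in> f ` (adeles // quasi_orbit_rel)" using fcl[OF a(1)] a(2) by force
        qed
      qed
      thus ?thesis using chi_image by simp
    qed
  qed
  thus "\<exists>f. bij_betw f (adeles // quasi_orbit_rel) chi_codomain \<and>
            (\<forall>a\<in>adeles. f (quasi_orbit_rel `` {a}) = chi a)" using fcl by blast
qed


end
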